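(* (Work in $\mathsf{ZFC}$.) Let $\mathcal S$ be a countable vocabulary of function symbols and predicate symbols of finite arity, containing the binary predicate symbols $=,\neq,\in,\notin$. Let $T$ be a set of $\Sigma(L_{\omega\omega}(\mathcal S))$ conditionals and let $\chi\Rightarrow\chi'$ be a $\Sigma(L_{\omega\omega}(\mathcal S))$ conditional. Then either $\chi\Rightarrow\chi'$ has a finitary positivistic proof from the axioms of $T$ together with the logical axioms (L1)–(L23) listed below, or there is an admissible structure $M$ that models every conditional of $T$ but in which, for some assignment of elements to the free variables, $\chi$ holds and $\chi'$ fails. Logical axioms (here free and bound variables are kept distinct: $x,y$ denote bound variables, $a$ a free variable, $r,s,t$ terms, $\phi,\psi,\chi$ arbitrary $\Sigma$ formulas, and $\phi^x_t$ denotes substitution of $t$ for $x$): (L1) $\phi\Rightarrow\top$; (L2) $\bot\Rightarrow\psi$; (L3) $\phi\wedge\psi\Rightarrow\phi$; (L4) $\phi\wedge\psi\Rightarrow\psi$; (L5) $\phi\Rightarrow\phi\wedge\phi$; (L6) $\phi\Rightarrow\phi\vee\psi$; (L7) $\psi\Rightarrow\phi\vee\psi$; (L8) $\psi\vee\psi\Rightarrow\psi$; (L9) $(\phi\vee\psi)\wedge\chi\Rightarrow(\phi\wedge\chi)\vee(\psi\wedge\chi)$; (L10) $\phi^x_t\Rightarrow\exists x\,\phi$; (L11) $\exists y\,\psi\Rightarrow\psi$; (L12) $\chi\wedge\exists y\,\phi\Rightarrow\exists y\,(\chi\wedge\phi)$; (L13) $t\in s\wedge\forall x\in s\,\phi\Rightarrow\phi^x_t$;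 (L14) $\psi\Rightarrow\forall y\in s\,(\psi\wedge y\in s)$; (L15) $\forall y\in s\,(\chi\vee\phi)\Rightarrow\chi\vee\forall y\in s\,\phi$; (L16) $\top\Rightarrow s\in t\vee s\notin t$; (L17) $s\in t\wedge s\notin t\Rightarrow\bot$; (L18) $\top\Rightarrow s=t\vee s\neq t$; (L19) $s=t\wedge s\neq t\Rightarrow\bot$; (L20) $\top\Rightarrow t=t$; (L21) $s=t\Rightarrow t=s$; (L22) $r=s\wedge s=t\Rightarrow r=t$; (L23) $s=t\wedge\phi^a_s\Rightarrow\phi^a_t$.
   Context: $\Sigma(L_{\omega\omega}(\mathcal S))$ formulas: built from atomic formulas of $\mathcal S$ (including the logical constants $\top,\bot$; the symbols $\neq,\notin$ are primitive predicate symbols, not abbreviations) using binary conjunction $\wedge$, binary disjunction $\vee$, bounded universal quantification $\forall x\in t\,\phi$ ($t$ a term), and unbounded existential quantification $\exists x\,\phi$; there is no negation and no implication. A conditional is an expression $\phi\Rightarrow\psi$ with $\phi,\psi$ $\Sigma$ formulas. An application of a conditional $\phi(v_1,\dots,v_n)\Rightarrow\psi(v_1,\dots,v_n)$ (where $v_1,\dots,v_n$ include its free variables) is a pair $(\chi_0,\chi_1)$ of $\Sigma$ formulas such that $\chi_1$ is obtained from $\chi_0$ by replacing one occurrence of a subformula of the form $\phi(t_1,\dots,t_n)$ by $\psi(t_1,\dots,t_n)$, where the terms $t_i$ may contain variables bound in $\chi_0$ ("deep inference"). A finitary positivistic proof of $\chi\Rightarrow\chi'$ from a set of conditionals (axioms)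 is a finite sequence $\chi_0=\chi,\chi_1,\dots,\chi_n=\chi'$ of $\Sigma$ formulas such that each $(\chi_i,\chi_{i+1})$ is an application of some axiom. An admissible structure for $\mathcal S$ is a structure in which $=$ is genuine equality, $\neq$ is interpreted as the complement of $=$, and $\notin$ as the complement of the interpretation of $\in$. A structure models a conditional $\phi\Rightarrow\psi$ if it satisfies the universal closure of $\phi\to\psi$. *)

theory Defs
  imports Main "HOL-Library.Countable"
begin

text \<open>Function symbols range over a countable
type 'f (constants are 0-ary function symbols); the predicate symbols are the
four distinguished binary symbols =, ~=, in, notin together with the
symbols of a countable type 'p.  Arities are given by functions
arF :: 'f => nat and arP :: 'p => nat.\<close>

datatype 'p psym = PEq | PNeq | PIn | PNin | PRel 'p

datatype 'f trm = Var nat | Fn 'f "'f trm list"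

datatype ('f, 'p) fm =
    Top
  | Bot
  | Atom "'p psym" "'f trm list"
  | Conj "('f, 'p) fm" "('f, 'p) fm"
  | Disj "('f, 'p) fm" "('f, 'p) fm"
  | BAll nat "'f trm" "('f, 'p) fm"   (* BAll x t phi  =  forall x in t. phi *)
  | Ex nat "('f, 'p) fm"

fun parity :: "('p \<Rightarrow> nat) \<Rightarrow> 'p psym \<Rightarrow> nat" where
  "parity arP (PRel p) = arP p"
| "parity arP _ = 2"

fun wf_trm :: "('f \<Rightarrow> nat) \<Rightarrow> 'f trm \<Rightarrow> bool" where
  "wf_trm arF (Var x) = True"
| "wf_trm arF (Fn f ts) = (length ts = arF f \<and> (\<forall>t\<in>set ts. wf_trm arF t))"

fun wf_fm :: "('f \<Rightarrow> nat) \<Rightarrow> ('p \<Rightarrow> nat) \<Rightarrow> ('f, 'p) fm \<Rightarrow> bool" where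
  "wf_fm arF arP Top = True"
| "wf_fm arF arP Bot = True"
| "wf_fm arF arP (Atom P ts) = (length ts = parity arP P \<and> (\<forall>t\<in>set ts. wf_trm arF t))"
| "wf_fm arF arP (Conj \<phi> \<psi>) = (wf_fm arF arP \<phi> \<and> wf_fm arF arP \<psi>)"
| "wf_fm arF arP (Disj \<phi> \<psi>) = (wf_fm arF arP \<phi> \<and> wf_fm arF arP \<psi>)"
| "wf_fm arF arP (BAll x t \<phi>) = (wf_trm arF t \<and> wf_fm arF arP \<phi>)"
| "wf_fm arF arP (Ex x \<phi>) = wf_fm arF arP \<phi>"

text \<open>A conditional phi => psi is represented by the pair (phi, psi).\<close>

type_synonym ('f, 'p) cond = "('f, 'p) fm \<times> ('f, 'p) fm"

fun fv_trm :: "'f trm \<Rightarrow> nat set" where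
  "fv_trm (Var x) = {x}"
| "fv_trm (Fn f ts) = (\<Union>t\<in>set ts. fv_trm t)"

fun fv :: "('f, 'p) fm \<Rightarrow> nat set" where
  "fv Top = {}"
| "fv Bot = {}"
| "fv (Atom P ts) = (\<Union>t\<in>set ts. fv_trm t)"
| "fv (Conj \<phi> \<psi>) = fv \<phi> \<union> fv \<psi>"
| "fv (Disj \<phi> \<psi>) = fv \<phi> \<union> fv \<psi>"
| "fv (BAll x t \<phi>) = fv_trm t \<union> (fv \<phi> - {x})"
| "fv (Ex x \<phi>) = fv \<phi> - {x}"

fun tsubst :: "(nat \<Rightarrow> 'f trm) \<Rightarrow> 'f trm \<Rightarrow> 'f trm" where
  "tsubst \<sigma> (Var x) = \<sigma> x"
| "tsubst \<sigma> (Fn f ts) = Fn f (map (tsubst \<sigma>) ts)"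

fun subst :: "(nat \<Rightarrow> 'f trm) \<Rightarrow> ('f, 'p) fm \<Rightarrow> ('f, 'p) fm" where
  "subst \<sigma> Top = Top"
| "subst \<sigma> Bot = Bot"
| "subst \<sigma> (Atom P ts) = Atom P (map (tsubst \<sigma>) ts)"
| "subst \<sigma> (Conj \<phi> \<psi>) = Conj (subst \<sigma> \<phi>) (subst \<sigma> \<psi>)"
| "subst \<sigma> (Disj \<phi> \<psi>) = Disj (subst \<sigma> \<phi>) (subst \<sigma> \<psi>)"
| "subst \<sigma> (BAll x t \<phi>) = BAll x (tsubst \<sigma> t) (subst (\<sigma>(x := Var x)) \<phi>)"
| "subst \<sigma> (Ex x \<phi>) = Ex x (subst (\<sigma>(x := Var x)) \<phi>)"

fun substok :: "(nat \<Rightarrow> 'f trm) \<Rightarrow> ('f, 'p) fm \<Rightarrow> bool" where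
  "substok \<sigma> Top = True"
| "substok \<sigma> Bot = True"
| "substok \<sigma> (Atom P ts) = True"
| "substok \<sigma> (Conj \<phi> \<psi>) = (substok \<sigma> \<phi> \<and> substok \<sigma> \<psi>)"
| "substok \<sigma> (Disj \<phi> \<psi>) = (substok \<sigma> \<phi> \<and> substok \<sigma> \<psi>)"
| "substok \<sigma> (BAll x t \<phi>) =
     (substok (\<sigma>(x := Var x)) \<phi> \<and> (\<forall>v \<in> fv \<phi> - {x}. x \<notin> fv_trm (\<sigma> v)))"
| "substok \<sigma> (Ex x \<phi>) =
     (substok (\<sigma>(x := Var x)) \<phi> \<and> (\<forall>v \<in> fv \<phi> - {x}. x \<notin> fv_trm (\<sigma> v)))"

text \<open>phi^x_t (only used when substok (Var(x := t)) phi).\<close>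

definition subst1 :: "('f, 'p) fm \<Rightarrow> nat \<Rightarrow> 'f trm \<Rightarrow> ('f, 'p) fm" where
  "subst1 \<phi> x t = subst (Var(x := t)) \<phi>"

definition substok1 :: "('f, 'p) fm \<Rightarrow> nat \<Rightarrow> 'f trm \<Rightarrow> bool" where
  "substok1 \<phi> x t = substok (Var(x := t)) \<phi>"

inductive replace_one :: "('f, 'p) fm \<Rightarrow> ('f, 'p) fm \<Rightarrow> ('f, 'p) fm \<Rightarrow> ('f, 'p) fm \<Rightarrow> bool"
  for \<phi> \<psi> where
  here: "replace_one \<phi> \<psi> \<phi> \<psi>"
| conjL: "replace_one \<phi> \<psi> \<alpha> \<alpha>' \<Longrightarrow> replace_one \<phi> \<psi> (Conj \<alpha> \<beta>) (Conj \<alpha>' \<beta>)"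
| conjR: "replace_one \<phi> \<psi> \<beta> \<beta>' \<Longrightarrow> replace_one \<phi> \<psi> (Conj \<alpha> \<beta>) (Conj \<alpha> \<beta>')"
| disjL: "replace_one \<phi> \<psi> \<alpha> \<alpha>' \<Longrightarrow> replace_one \<phi> \<psi> (Disj \<alpha> \<beta>) (Disj \<alpha>' \<beta>)"
| disjR: "replace_one \<phi> \<psi> \<beta> \<beta>' \<Longrightarrow> replace_one \<phi> \<psi> (Disj \<alpha> \<beta>) (Disj \<alpha> \<beta>')"
| ball: "replace_one \<phi> \<psi> \<alpha> \<alpha>' \<Longrightarrow> replace_one \<phi> \<psi> (BAll x t \<alpha>) (BAll x t \<alpha>')"
| ex: "replace_one \<phi> \<psi> \<alpha> \<alpha>' \<Longrightarrow> replace_one \<phi> \<psi> (Ex x \<alpha>) (Ex x \<alpha>')"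

text \<open>(chi0, chi1) is an application of the conditional phi => psi:
chi1 is obtained from chi0 by replacing one occurrence of phi(t_1..t_n) by
psi(t_1..t_n), for terms t_i substituted (without capture) for the free
variables; the t_i may contain variables bound in chi0.\<close>

definition application :: "('f, 'p) cond \<Rightarrow> ('f, 'p) fm \<Rightarrow> ('f, 'p) fm \<Rightarrow> bool" where
  "application c \<chi>0 \<chi>1 =
     (\<exists>\<sigma>. substok \<sigma> (fst c) \<and> substok \<sigma> (snd c) \<and>
          replace_one (subst \<sigma> (fst c)) (subst \<sigma> (snd c)) \<chi>0 \<chi>1)"

abbreviation "In s t \<equiv> Atom PIn [s, t]"
abbreviation "Nin s t \<equiv> Atom PNin [s, t]"
abbreviation "Eq s t \<equiv> Atom PEq [s, t]"
abbreviation "Neq s t \<equiv> Atom PNeq [s, t]"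

text \<open>The logical axioms (L1)-(L23).  The paper keeps free and bound
variables syntactically distinct; with a single sort of variables, the
corresponding (standard) side conditions are made explicit.\<close>

inductive_set logical_axioms :: "('f, 'p) cond set" where
  L1: "(\<phi>, Top) \<in> logical_axioms"
| L2: "(Bot, \<psi>) \<in> logical_axioms"
| L3: "(Conj \<phi> \<psi>, \<phi>) \<in> logical_axioms"
| L4: "(Conj \<phi> \<psi>, \<psi>) \<in> logical_axioms"
| L5: "(\<phi>, Conj \<phi> \<phi>) \<in> logical_axioms"
| L6: "(\<phi>, Disj \<phi> \<psi>) \<in> logical_axioms"
| L7: "(\<psi>, Disj \<phi> \<psi>) \<in> logical_axioms"
| L8: "(Disj \<psi> \<psi>, \<psi>) \<in> logical_axioms"
| L9: "(Conj (Disj \<phi> \<psi>) \<chi>, Disj (Conj \<phi> \<chi>) (Conj \<psi> \<chi>)) \<in> logical_axioms"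
| L10: "substok1 \<phi> x t \<Longrightarrow> (subst1 \<phi> x t, Ex x \<phi>) \<in> logical_axioms"
| L11: "y \<notin> fv \<psi> \<Longrightarrow> (Ex y \<psi>, \<psi>) \<in> logical_axioms"
| L12: "y \<notin> fv \<chi> \<Longrightarrow> (Conj \<chi> (Ex y \<phi>), Ex y (Conj \<chi> \<phi>)) \<in> logical_axioms"
| L13: "substok1 \<phi> x t \<Longrightarrow> (Conj (In t s) (BAll x s \<phi>), subst1 \<phi> x t) \<in> logical_axioms"
| L14: "y \<notin> fv \<psi> \<Longrightarrow> y \<notin> fv_trm s \<Longrightarrow>
          (\<psi>, BAll y s (Conj \<psi> (In (Var y) s))) \<in> logical_axioms"
| L15: "y \<notin> fv \<chi> \<Longrightarrow> (BAll y s (Disj \<chi> \<phi>), Disj \<chi> (BAll y s \<phi>)) \<in> logical_axioms"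
| L16: "(Top, Disj (In s t) (Nin s t)) \<in> logical_axioms"
| L17: "(Conj (In s t) (Nin s t), Bot) \<in> logical_axioms"
| L18: "(Top, Disj (Eq s t) (Neq s t)) \<in> logical_axioms"
| L19: "(Conj (Eq s t) (Neq s t), Bot) \<in> logical_axioms"
| L20: "(Top, Eq t t) \<in> logical_axioms"
| L21: "(Eq s t, Eq t s) \<in> logical_axioms"
| L22: "(Conj (Eq r s) (Eq s t), Eq r t) \<in> logical_axioms"
| L23: "substok1 \<phi> a s \<Longrightarrow> substok1 \<phi> a t \<Longrightarrow>
          (Conj (Eq s t) (subst1 \<phi> a s), subst1 \<phi> a t) \<in> logical_axioms"

definition fin_pos_proof ::
  "('f \<Rightarrow> nat) \<Rightarrow> ('p \<Rightarrow> nat) \<Rightarrow> ('f, 'p) cond set \<Rightarrow> ('f, 'p) fm list \<Rightarrow>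
   ('f, 'p) fm \<Rightarrow> ('f, 'p) fm \<Rightarrow> bool" where
  "fin_pos_proof arF arP Ax cs \<chi> \<chi>' =
     (cs \<noteq> [] \<and> hd cs = \<chi> \<and> last cs = \<chi>' \<and>
      (\<forall>c\<in>set cs. wf_fm arF arP c) \<and>
      (\<forall>i. Suc i < length cs \<longrightarrow> (\<exists>ax\<in>Ax. application ax (cs ! i) (cs ! Suc i))))"

definition provable ::
  "('f \<Rightarrow> nat) \<Rightarrow> ('p \<Rightarrow> nat) \<Rightarrow> ('f, 'p) cond set \<Rightarrow> ('f, 'p) cond \<Rightarrow> bool" where
  "provable arF arP Ax c = (\<exists>cs. fin_pos_proof arF arP Ax cs (fst c) (snd c))"

record ('u, 'f, 'p) struc =
  dom :: "'u set"
  fint :: "'f \<Rightarrow> 'u list \<Rightarrow> 'u"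
  pint :: "'p psym \<Rightarrow> 'u list \<Rightarrow> bool"

definition is_struc :: "('f \<Rightarrow> nat) \<Rightarrow> ('u, 'f, 'p) struc \<Rightarrow> bool" where
  "is_struc arF M =
     (dom M \<noteq> {} \<and>
      (\<forall>f us. length us = arF f \<and> set us \<subseteq> dom M \<longrightarrow> fint M f us \<in> dom M))"

definition admissible :: "('f \<Rightarrow> nat) \<Rightarrow> ('u, 'f, 'p) struc \<Rightarrow> bool" where
  "admissible arF M =
     (is_struc arF M \<and>
      (\<forall>a\<in>dom M. \<forall>b\<in>dom M.
         (pint M PEq [a, b] \<longleftrightarrow> a = b) \<and>
         (pint M PNeq [a, b] \<longleftrightarrow> \<not> pint M PEq [a, b]) \<and>
         (pint M PNin [a, b] \<longleftrightarrow> \<not> pint M PIn [a, b])))"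

fun eval :: "('u, 'f, 'p) struc \<Rightarrow> (nat \<Rightarrow> 'u) \<Rightarrow> 'f trm \<Rightarrow> 'u" where
  "eval M \<rho> (Var x) = \<rho> x"
| "eval M \<rho> (Fn f ts) = fint M f (map (eval M \<rho>) ts)"

fun sat :: "('u, 'f, 'p) struc \<Rightarrow> (nat \<Rightarrow> 'u) \<Rightarrow> ('f, 'p) fm \<Rightarrow> bool" where
  "sat M \<rho> Top = True"
| "sat M \<rho> Bot = False"
| "sat M \<rho> (Atom P ts) = pint M P (map (eval M \<rho>) ts)"
| "sat M \<rho> (Conj \<phi> \<psi>) = (sat M \<rho> \<phi> \<and> sat M \<rho> \<psi>)"
| "sat M \<rho> (Disj \<phi> \<psi>) = (sat M \<rho> \<phi> \<or> sat M \<rho> \<psi>)"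
| "sat M \<rho> (BAll x t \<phi>) =
     (\<forall>d\<in>dom M. pint M PIn [d, eval M \<rho> t] \<longrightarrow> sat M (\<rho>(x := d)) \<phi>)"
| "sat M \<rho> (Ex x \<phi>) = (\<exists>d\<in>dom M. sat M (\<rho>(x := d)) \<phi>)"

definition assignment :: "('u, 'f, 'p) struc \<Rightarrow> (nat \<Rightarrow> 'u) \<Rightarrow> bool" where
  "assignment M \<rho> = (\<forall>x. \<rho> x \<in> dom M)"

definition models_cond :: "('u, 'f, 'p) struc \<Rightarrow> ('f, 'p) cond \<Rightarrow> bool" where
  "models_cond M c = (\<forall>\<rho>. assignment M \<rho> \<longrightarrow> sat M \<rho> (fst c) \<longrightarrow> sat M \<rho> (snd c))"

end

theory Submission
  imports Defs "HOL-Library.Countable" "HOL-Library.Infinite_Set"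
begin

instance psym :: (countable) countable by countable_datatype
instance trm :: (countable) countable by countable_datatype
instance fm :: (countable, countable) countable by countable_datatype

section \<open>Syntax\<close>

fun bv :: "('f,'p) fm \<Rightarrow> nat set" where
  "bv Top = {}" | "bv Bot = {}" | "bv (Atom P ts) = {}"
| "bv (Conj a b) = bv a \<union> bv b" | "bv (Disj a b) = bv a \<union> bv b"
| "bv (BAll x t a) = insert x (bv a)" | "bv (Ex x a) = insert x (bv a)"

fun av :: "('f,'p) fm \<Rightarrow> nat set" where
  "av Top = {}" | "av Bot = {}" | "av (Atom P ts) = (\<Union>t\<in>set ts. fv_trm t)"
| "av (Conj a b) = av a \<union> av b" | "av (Disj a b) = av a \<union> av b"
| "av (BAll x t a) = insert x (fv_trm t \<union> av a)" | "av (Ex x a) = insert x (av a)"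

fun fsize :: "('f,'p) fm \<Rightarrow> nat" where
  "fsize Top = 1" | "fsize Bot = 1" | "fsize (Atom P ts) = 1"
| "fsize (Conj a b) = Suc (fsize a + fsize b)" | "fsize (Disj a b) = Suc (fsize a + fsize b)"
| "fsize (BAll x t a) = Suc (fsize a)" | "fsize (Ex x a) = Suc (fsize a)"

lemma finite_fv_trm[simp]: "finite (fv_trm t)"
  by (induction t) auto

lemma finite_av[simp]: "finite (av \<phi>)"
  by (induction \<phi>) auto

lemma fv_av: "fv \<phi> \<subseteq> av \<phi>"
  by (induction \<phi>) auto

lemma bv_av: "bv \<phi> \<subseteq> av \<phi>"
  by (induction \<phi>) auto

lemma tsubst_cong: "(\<forall>v\<in>fv_trm t. \<sigma> v = \<sigma>' v) \<Longrightarrow> tsubst \<sigma> t = tsubst \<sigma>' t"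
  by (induction t) auto

lemma tsubst_id[simp]: "tsubst Var t = t"
  by (induction t) (auto simp: map_idI)

lemma tsubst_comp: "tsubst \<sigma>2 (tsubst \<sigma>1 t) = tsubst (\<lambda>v. tsubst \<sigma>2 (\<sigma>1 v)) t"
  by (induction t) auto

lemma fv_tsubst: "fv_trm (tsubst \<sigma> t) = (\<Union>v\<in>fv_trm t. fv_trm (\<sigma> v))"
  by (induction t) auto

lemma wf_tsubst: "wf_trm arF t \<Longrightarrow> (\<forall>v. wf_trm arF (\<sigma> v)) \<Longrightarrow> wf_trm arF (tsubst \<sigma> t)"
  by (induction t) auto

lemma eval_tsubst: "eval M \<rho> (tsubst \<sigma> t) = eval M (\<lambda>v. eval M \<rho> (\<sigma> v)) t"
  by (induction t) (auto simp: comp_def cong: map_cong)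

lemma eval_cong: "(\<forall>v\<in>fv_trm t. \<rho> v = \<rho>' v) \<Longrightarrow> eval M \<rho> t = eval M \<rho>' t"
  by (induction t) (auto cong: map_cong)

lemma subst_cong: "(\<forall>v\<in>fv \<phi>. \<sigma> v = \<sigma>' v) \<Longrightarrow> subst \<sigma> \<phi> = subst \<sigma>' \<phi>"
proof (induction \<phi> arbitrary: \<sigma> \<sigma>')
  case (Atom P ts) then show ?case by (auto intro!: tsubst_cong)
next
  case (BAll x t \<phi>) then show ?case by (auto intro!: tsubst_cong)
qed auto

lemma subst_id[simp]: "subst Var \<phi> = \<phi>"
  by (induction \<phi>) (auto simp: map_idI)

lemma fv_subst: "fv (subst \<sigma> \<phi>) \<subseteq> (\<Union>v\<in>fv \<phi>. fv_trm (\<sigma> v))"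
proof (induction \<phi> arbitrary: \<sigma>)
  case (Atom P ts) then show ?case by (auto simp: fv_tsubst)
next
  case (BAll x t \<phi>)
  show ?case
  proof
    fix u assume "u \<in> fv (subst \<sigma> (BAll x t \<phi>))"
    then consider "u \<in> fv_trm (tsubst \<sigma> t)" | "u \<in> fv (subst (\<sigma>(x := Var x)) \<phi>)" "u \<noteq> x" by auto
    then show "u \<in> (\<Union>v\<in>fv (BAll x t \<phi>). fv_trm (\<sigma> v))"
    proof cases
      case 1 then show ?thesis by (auto simp: fv_tsubst)
    next
      case 2
      then obtain v where "v \<in> fv \<phi>" "u \<in> fv_trm ((\<sigma>(x := Var x)) v)" using BAll.IH by blast
      with 2 show ?thesis by (cases "v = x") auto
    qed
  qed
next
  case (Ex x \<phi>)
  show ?case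
  proof
    fix u assume "u \<in> fv (subst \<sigma> (Ex x \<phi>))"
    then have 2: "u \<in> fv (subst (\<sigma>(x := Var x)) \<phi>)" "u \<noteq> x" by auto
    then obtain v where "v \<in> fv \<phi>" "u \<in> fv_trm ((\<sigma>(x := Var x)) v)" using Ex.IH by blast
    with 2 show "u \<in> (\<Union>v\<in>fv (Ex x \<phi>). fv_trm (\<sigma> v))" by (cases "v = x") auto
  qed
next
  case (Conj a b) then show ?case by (simp; blast)
next
  case (Disj a b) then show ?case by (simp; blast)
qed auto

lemma bv_subst[simp]: "bv (subst \<sigma> \<phi>) = bv \<phi>"
  by (induction \<phi> arbitrary: \<sigma>) auto

lemma fsize_subst[simp]: "fsize (subst \<sigma> \<phi>) = fsize \<phi>"
  by (induction \<phi> arbitrary: \<sigma>) auto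

lemma wf_subst: "wf_fm arF arP \<phi> \<Longrightarrow> (\<forall>v. wf_trm arF (\<sigma> v)) \<Longrightarrow> wf_fm arF arP (subst \<sigma> \<phi>)"
  by (induction \<phi> arbitrary: \<sigma>) (auto simp: wf_tsubst)

lemma substok_gen:
  "(\<forall>u\<in>fv \<phi>. \<sigma> u = Var u \<or> fv_trm (\<sigma> u) \<inter> bv \<phi> = {}) \<Longrightarrow> substok \<sigma> \<phi>"
proof (induction \<phi> arbitrary: \<sigma>)
  case (BAll x t \<phi>)
  have "substok (\<sigma>(x := Var x)) \<phi>" by (rule BAll.IH) (use BAll.prems in auto)
  moreover have "\<forall>v \<in> fv \<phi> - {x}. x \<notin> fv_trm (\<sigma> v)"
  proof
    fix v assume v: "v \<in> fv \<phi> - {x}"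
    then have "v \<in> fv (BAll x t \<phi>)" by auto
    with BAll.prems v show "x \<notin> fv_trm (\<sigma> v)" by fastforce
  qed
  ultimately show ?case by simp
next
  case (Ex x \<phi>)
  have "substok (\<sigma>(x := Var x)) \<phi>" by (rule Ex.IH) (use Ex.prems in auto)
  moreover have "\<forall>v \<in> fv \<phi> - {x}. x \<notin> fv_trm (\<sigma> v)"
  proof
    fix v assume v: "v \<in> fv \<phi> - {x}"
    then have "v \<in> fv (Ex x \<phi>)" by auto
    with Ex.prems v show "x \<notin> fv_trm (\<sigma> v)" by fastforce
  qed
  ultimately show ?case by simp
qed auto

lemma substok_id: "(\<forall>u\<in>fv \<phi>. \<sigma> u = Var u) \<Longrightarrow> substok \<sigma> \<phi>"
  by (rule substok_gen) auto

lemma subst_comp: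
  "substok \<sigma>1 \<phi> \<Longrightarrow> subst \<sigma>2 (subst \<sigma>1 \<phi>) = subst (\<lambda>v. tsubst \<sigma>2 (\<sigma>1 v)) \<phi>"
proof (induction \<phi> arbitrary: \<sigma>1 \<sigma>2)
  case (Atom P ts) then show ?case by (auto simp: tsubst_comp)
next
  case (BAll x t \<phi>)
  have "subst (\<sigma>2(x := Var x)) (subst (\<sigma>1(x := Var x)) \<phi>)
      = subst (\<lambda>v. tsubst (\<sigma>2(x := Var x)) ((\<sigma>1(x := Var x)) v)) \<phi>"
    by (rule BAll.IH) (use BAll.prems in \<open>simp only: substok.simps\<close>)
  also have "\<dots> = subst ((\<lambda>v. tsubst \<sigma>2 (\<sigma>1 v))(x := Var x)) \<phi>"
    using BAll.prems by (intro subst_cong) (auto intro!: tsubst_cong)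
  finally show ?case by (simp add: tsubst_comp)
next
  case (Ex x \<phi>)
  have "subst (\<sigma>2(x := Var x)) (subst (\<sigma>1(x := Var x)) \<phi>)
      = subst (\<lambda>v. tsubst (\<sigma>2(x := Var x)) ((\<sigma>1(x := Var x)) v)) \<phi>"
    by (rule Ex.IH) (use Ex.prems in \<open>simp only: substok.simps\<close>)
  also have "\<dots> = subst ((\<lambda>v. tsubst \<sigma>2 (\<sigma>1 v))(x := Var x)) \<phi>"
    using Ex.prems by (intro subst_cong) (auto intro!: tsubst_cong)
  finally show ?case by simp
qed auto

lemma sat_cong: "(\<forall>v\<in>fv \<phi>. \<rho> v = \<rho>' v) \<Longrightarrow> sat M \<rho> \<phi> = sat M \<rho>' \<phi>"
proof (induction \<phi> arbitrary: \<rho> \<rho>')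
  case (Atom P ts)
  have "map (eval M \<rho>) ts = map (eval M \<rho>') ts"
    using Atom by (auto simp: map_eq_conv intro!: eval_cong)
  then show ?case by (metis sat.simps(3))
next
  case (BAll x t \<phi>)
  have e: "eval M \<rho> t = eval M \<rho>' t" using BAll.prems by (auto intro!: eval_cong)
  have "\<And>d. sat M (\<rho>(x := d)) \<phi> = sat M (\<rho>'(x := d)) \<phi>"
    by (rule BAll.IH) (use BAll.prems in auto)
  then show ?case using e by simp
next
  case (Ex x \<phi>)
  have "\<And>d. sat M (\<rho>(x := d)) \<phi> = sat M (\<rho>'(x := d)) \<phi>"
    by (rule Ex.IH) (use Ex.prems in auto)
  then show ?case by simp
next
  case (Conj a b)
  have "sat M \<rho> a = sat M \<rho>' a" by (rule Conj.IH(1)) (use Conj.prems in auto)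
  moreover have "sat M \<rho> b = sat M \<rho>' b" by (rule Conj.IH(2)) (use Conj.prems in auto)
  ultimately show ?case by simp
next
  case (Disj a b)
  have "sat M \<rho> a = sat M \<rho>' a" by (rule Disj.IH(1)) (use Disj.prems in auto)
  moreover have "sat M \<rho> b = sat M \<rho>' b" by (rule Disj.IH(2)) (use Disj.prems in auto)
  ultimately show ?case by simp
qed auto

lemma sat_subst:
  "substok \<sigma> \<phi> \<Longrightarrow> sat M \<rho> (subst \<sigma> \<phi>) = sat M (\<lambda>v. eval M \<rho> (\<sigma> v)) \<phi>"
proof (induction \<phi> arbitrary: \<sigma> \<rho>)
  case (Atom P ts) then show ?case by (simp add: eval_tsubst comp_def)
next
  case (BAll x t \<phi>)
  have "\<And>d. sat M (\<rho>(x := d)) (subst (\<sigma>(x := Var x)) \<phi>)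
           = sat M ((\<lambda>v. eval M \<rho> (\<sigma> v))(x := d)) \<phi>"
  proof -
    fix d
    have "sat M (\<rho>(x := d)) (subst (\<sigma>(x := Var x)) \<phi>)
        = sat M (\<lambda>v. eval M (\<rho>(x := d)) ((\<sigma>(x := Var x)) v)) \<phi>"
      by (rule BAll.IH) (use BAll.prems in \<open>simp only: substok.simps\<close>)
    also have "\<dots> = sat M ((\<lambda>v. eval M \<rho> (\<sigma> v))(x := d)) \<phi>"
      using BAll.prems by (intro sat_cong) (auto intro!: eval_cong)
    finally show "?thesis d" .
  qed
  then show ?case by (simp add: eval_tsubst)
next
  case (Ex x \<phi>)
  have "\<And>d. sat M (\<rho>(x := d)) (subst (\<sigma>(x := Var x)) \<phi>)
           = sat M ((\<lambda>v. eval M \<rho> (\<sigma> v))(x := d)) \<phi>"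
  proof -
    fix d
    have "sat M (\<rho>(x := d)) (subst (\<sigma>(x := Var x)) \<phi>)
        = sat M (\<lambda>v. eval M (\<rho>(x := d)) ((\<sigma>(x := Var x)) v)) \<phi>"
      by (rule Ex.IH) (use Ex.prems in \<open>simp only: substok.simps\<close>)
    also have "\<dots> = sat M ((\<lambda>v. eval M \<rho> (\<sigma> v))(x := d)) \<phi>"
      using Ex.prems by (intro sat_cong) (auto intro!: eval_cong)
    finally show "?thesis d" .
  qed
  then show ?case by simp
qed auto

lemma ren_ok:
  assumes "y \<notin> av \<phi>" "x \<noteq> y" "\<forall>v. \<sigma>1 v = Var v \<or> (v = x \<and> \<sigma>1 v = Var y)"
  shows "substok (Var(y := Var x)) (subst \<sigma>1 \<phi>)"
  using assms
proof (induction \<phi> arbitrary: \<sigma>1)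
  case (BAll z t \<phi>)
  let ?s = "\<sigma>1(z := Var z)"
  have zy: "z \<noteq> y" using BAll.prems(1) by auto
  have h: "\<forall>v. ?s v = Var v \<or> (v = x \<and> ?s v = Var y)"
  proof
    fix v show "?s v = Var v \<or> (v = x \<and> ?s v = Var y)"
      using BAll.prems(3)[rule_format, of v] by (cases "v = z") auto
  qed
  have 1: "substok (Var(y := Var x)) (subst ?s \<phi>)" using BAll.prems(1,2) h by (intro BAll.IH) auto
  have 2: "\<forall>v \<in> fv (subst ?s \<phi>) - {z}. z \<notin> fv_trm ((Var(y := Var x)) v)"
  proof (cases "z = x")
    case True
    have "?s = Var"
    proof (rule ext)
      fix v show "?s v = Var v" using BAll.prems(3)[rule_format, of v] True by (cases "v = z") auto
    qed
    then have "subst ?s \<phi> = \<phi>" by simp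
    moreover have "y \<notin> fv \<phi>" using BAll.prems(1) fv_av[of \<phi>] by auto
    ultimately show ?thesis by auto
  next
    case False then show ?thesis by auto
  qed
  have eq: "(Var(y := Var x))(z := Var z) = Var(y := Var x)" using zy by auto
  show ?case unfolding subst.simps substok.simps eq using 1 2 by blast
next
  case (Ex z \<phi>)
  let ?s = "\<sigma>1(z := Var z)"
  have zy: "z \<noteq> y" using Ex.prems(1) by auto
  have h: "\<forall>v. ?s v = Var v \<or> (v = x \<and> ?s v = Var y)"
  proof
    fix v show "?s v = Var v \<or> (v = x \<and> ?s v = Var y)"
      using Ex.prems(3)[rule_format, of v] by (cases "v = z") auto
  qed
  have 1: "substok (Var(y := Var x)) (subst ?s \<phi>)" using Ex.prems(1,2) h by (intro Ex.IH) auto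
  have 2: "\<forall>v \<in> fv (subst ?s \<phi>) - {z}. z \<notin> fv_trm ((Var(y := Var x)) v)"
  proof (cases "z = x")
    case True
    have "?s = Var"
    proof (rule ext)
      fix v show "?s v = Var v" using Ex.prems(3)[rule_format, of v] True by (cases "v = z") auto
    qed
    then have "subst ?s \<phi> = \<phi>" by simp
    moreover have "y \<notin> fv \<phi>" using Ex.prems(1) fv_av[of \<phi>] by auto
    ultimately show ?thesis by auto
  next
    case False then show ?thesis by auto
  qed
  have eq: "(Var(y := Var x))(z := Var z) = Var(y := Var x)" using zy by auto
  show ?case unfolding subst.simps substok.simps eq using 1 2 by blast
qed auto

lemma ren_ok1: "y \<notin> av \<phi> \<Longrightarrow> x \<noteq> y \<Longrightarrow> substok1 (subst1 \<phi> x (Var y)) y (Var x)"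
proof -
  assume a: "y \<notin> av \<phi>" "x \<noteq> y"
  have "\<forall>v. (Var(x := Var y)) v = Var v \<or> (v = x \<and> (Var(x := Var y)) v = Var y)" by simp
  then show ?thesis unfolding substok1_def subst1_def using ren_ok[OF a] by blast
qed

lemma ren_fwd_ok:
  assumes "y \<notin> av \<phi>" shows "substok1 \<phi> x (Var y)"
proof -
  have yb: "y \<notin> bv \<phi>" using assms bv_av[of \<phi>] by blast
  have "\<forall>u\<in>fv \<phi>. (Var(x := Var y)) u = Var u \<or> fv_trm ((Var(x := Var y)) u) \<inter> bv \<phi> = {}"
  proof
    fix u show "(Var(x := Var y)) u = Var u \<or> fv_trm ((Var(x := Var y)) u) \<inter> bv \<phi> = {}"
      using yb by (cases "u = x") simp_all
  qed
  then show ?thesis unfolding substok1_def by (rule substok_gen)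
qed

lemma ren_back:
  assumes "y \<notin> av \<phi>" "x \<noteq> y"
  shows "subst1 (subst1 \<phi> x (Var y)) y (Var x) = \<phi>"
proof -
  have "subst1 (subst1 \<phi> x (Var y)) y (Var x)
       = subst (\<lambda>v. tsubst (Var(y := Var x)) ((Var(x := Var y)) v)) \<phi>"
    using ren_fwd_ok[OF assms(1), of x] unfolding subst1_def substok1_def by (rule subst_comp)
  also have "\<dots> = subst Var \<phi>"
  proof (rule subst_cong, rule ballI)
    fix v assume "v \<in> fv \<phi>"
    then have "v \<noteq> y" using assms fv_av[of \<phi>] by blast
    then show "tsubst (Var(y := Var x)) ((Var(x := Var y)) v) = Var v"
      using assms(2) by (cases "v = x") auto
  qed
  finally show ?thesis by simp
qed

lemma fv_subst1:
  fixes \<phi> :: "('f,'p) fm"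
  shows "fv (subst1 \<phi> x (Var y)) \<subseteq> (fv \<phi> - {x}) \<union> {y}"
proof
  fix u assume u: "u \<in> fv (subst1 \<phi> x (Var y))"
  have "fv (subst1 \<phi> x (Var y)) \<subseteq> (\<Union>v\<in>fv \<phi>. fv_trm ((Var(x := Var y) :: nat \<Rightarrow> 'f trm) v))"
    unfolding subst1_def by (rule fv_subst)
  with u obtain v where "v \<in> fv \<phi>" "u \<in> fv_trm ((Var(x := Var y) :: nat \<Rightarrow> 'f trm) v)" by auto
  then show "u \<in> (fv \<phi> - {x}) \<union> {y}" by (cases "v = x") auto
qed


lemma tsubst_triv: "a \<notin> fv_trm t \<Longrightarrow> tsubst (Var(a := u)) t = t"
  using tsubst_cong[of t "Var(a := u)" Var] by auto

lemma fresh_ex: "finite (S::nat set) \<Longrightarrow> \<exists>n. n \<notin> S"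
  using infinite_UNIV_nat by (meson ex_new_if_finite)

lemma sub_ball:
  assumes "a \<notin> fv_trm s" "a \<notin> fv \<psi>"
  shows "subst1 (BAll z (tsubst (Var(x := Var a)) s) \<psi>) a t = BAll z (tsubst (Var(x := t)) s) \<psi>"
proof -
  have 1: "tsubst (Var(a := t)) (tsubst (Var(x := Var a)) s) = tsubst (Var(x := t)) s"
    unfolding tsubst_comp using assms(1) by (intro tsubst_cong) auto
  have 2: "subst ((Var(a := t))(z := Var z)) \<psi> = subst Var \<psi>"
    using assms(2) by (intro subst_cong) auto
  show ?thesis unfolding subst1_def using 1 2 by simp
qed

lemma sub_ball_ok:
  assumes "a \<notin> fv \<psi>"
  shows "substok1 (BAll z s0 \<psi>) a t"
proof -
  have "substok ((Var(a := t))(z := Var z)) \<psi>" using assms by (intro substok_id) auto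
  moreover have "\<forall>v\<in>fv \<psi> - {z}. z \<notin> fv_trm ((Var(a := t)) v)" using assms by auto
  ultimately show ?thesis unfolding substok1_def by simp
qed

fun bigC :: "('f,'p) fm list \<Rightarrow> ('f,'p) fm" where
  "bigC [] = Top" | "bigC (g # G) = Conj g (bigC G)"

fun bigD :: "('f,'p) fm list \<Rightarrow> ('f,'p) fm" where
  "bigD [] = Bot" | "bigD (g # G) = Disj g (bigD G)"

lemma fv_bigC: "fv (bigC G) = (\<Union>g\<in>set G. fv g)"
  by (induction G) auto

lemma fv_bigD: "fv (bigD G) = (\<Union>g\<in>set G. fv g)"
  by (induction G) auto

section \<open>Derivations\<close>

locale posl =
  fixes arF :: "'f \<Rightarrow> nat" and arP :: "'p \<Rightarrow> nat" and Ax :: "('f,'p) cond set"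
  assumes logax: "logical_axioms \<subseteq> Ax"
begin

abbreviation wff :: "('f,'p) fm \<Rightarrow> bool" where "wff \<equiv> wf_fm arF arP"

inductive drv :: "('f,'p) fm \<Rightarrow> ('f,'p) fm \<Rightarrow> bool" where
  drefl: "wff a \<Longrightarrow> drv a a"
| dstep: "drv a b \<Longrightarrow> ax \<in> Ax \<Longrightarrow> application ax b c \<Longrightarrow> wff c \<Longrightarrow> drv a c"

lemma drv_wf: "drv a b \<Longrightarrow> wff a \<and> wff b"
  by (induction rule: drv.induct) auto

lemma drv_provable: "drv a b \<Longrightarrow> provable arF arP Ax (a, b)"
proof (induction rule: drv.induct)
  case (drefl a) then show ?case
    unfolding provable_def fin_pos_proof_def by (intro exI[of _ "[a]"]) auto
next
  case (dstep a b ax c)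
  then obtain cs where cs: "fin_pos_proof arF arP Ax cs a b" unfolding provable_def by auto
  have ne: "cs \<noteq> []" and hd: "hd cs = a" and lst: "last cs = b"
    and wfc: "\<forall>x\<in>set cs. wff x"
    and st: "\<forall>i. Suc i < length cs \<longrightarrow> (\<exists>ax\<in>Ax. application ax (cs ! i) (cs ! Suc i))"
    using cs unfolding fin_pos_proof_def by auto
  let ?cs = "cs @ [c]"
  have "fin_pos_proof arF arP Ax ?cs a c"
    unfolding fin_pos_proof_def
  proof (intro conjI allI impI)
    show "?cs \<noteq> []" by simp
    show "hd ?cs = a" using ne hd by simp
    show "last ?cs = c" by simp
    show "\<forall>x\<in>set ?cs. wff x" using wfc dstep by auto
    fix i assume i: "Suc i < length ?cs"
    show "\<exists>ax\<in>Ax. application ax (?cs ! i) (?cs ! Suc i)"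
    proof (cases "Suc i < length cs")
      case True then show ?thesis using st by (auto simp: nth_append)
    next
      case False
      then have si: "Suc i = length cs" using i by simp
      then have "cs ! i = b" using ne lst by (metis diff_Suc_1 last_conv_nth)
      then show ?thesis using dstep si by (auto simp: nth_append)
    qed
  qed
  then show ?case unfolding provable_def by auto
qed

lemma drv_trans[trans]: assumes "drv a b" "drv b c" shows "drv a c"
  using assms(2,1) by (induction rule: drv.induct) (auto intro: dstep)

lemma drv_ctx:
  assumes "drv a b"
    and "\<And>ax u v. application ax u v \<Longrightarrow> application ax (K u) (K v)"
    and "\<And>u. wff u \<Longrightarrow> wff (K u)"
  shows "drv (K a) (K b)"
  using assms(1) by (induction rule: drv.induct) (auto intro: drefl dstep assms(2,3))

lemma drv_conjL: "drv a b \<Longrightarrow> wff c \<Longrightarrow> drv (Conj a c) (Conj b c)"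
  by (rule drv_ctx[where K="\<lambda>u. Conj u c"]) (auto simp: application_def intro: replace_one.intros)

lemma drv_conjR: "drv a b \<Longrightarrow> wff c \<Longrightarrow> drv (Conj c a) (Conj c b)"
  by (rule drv_ctx[where K="\<lambda>u. Conj c u"]) (auto simp: application_def intro: replace_one.intros)

lemma drv_disjL: "drv a b \<Longrightarrow> wff c \<Longrightarrow> drv (Disj a c) (Disj b c)"
  by (rule drv_ctx[where K="\<lambda>u. Disj u c"]) (auto simp: application_def intro: replace_one.intros)

lemma drv_disjR: "drv a b \<Longrightarrow> wff c \<Longrightarrow> drv (Disj c a) (Disj c b)"
  by (rule drv_ctx[where K="\<lambda>u. Disj c u"]) (auto simp: application_def intro: replace_one.intros)

lemma drv_ball: "drv a b \<Longrightarrow> wf_trm arF t \<Longrightarrow> drv (BAll x t a) (BAll x t b)"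
  by (rule drv_ctx[where K="\<lambda>u. BAll x t u"]) (auto simp: application_def intro: replace_one.intros)

lemma drv_ex: "drv a b \<Longrightarrow> drv (Ex x a) (Ex x b)"
  by (rule drv_ctx[where K="\<lambda>u. Ex x u"]) (auto simp: application_def intro: replace_one.intros)

lemma drv_ax:
  assumes "ax \<in> Ax" "substok \<sigma> (fst ax)" "substok \<sigma> (snd ax)"
    "wff (subst \<sigma> (fst ax))" "wff (subst \<sigma> (snd ax))"
  shows "drv (subst \<sigma> (fst ax)) (subst \<sigma> (snd ax))"
proof (rule dstep[OF drefl])
  show "application ax (subst \<sigma> (fst ax)) (subst \<sigma> (snd ax))"
    unfolding application_def using assms replace_one.here by blast
qed (use assms in auto)

lemma drv_lax: "(a, b) \<in> logical_axioms \<Longrightarrow> wff a \<Longrightarrow> wff b \<Longrightarrow> drv a b"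
  using drv_ax[of "(a,b)" Var] substok_id[of a Var] substok_id[of b Var] logax by auto

lemma conjE1: "wff a \<Longrightarrow> wff b \<Longrightarrow> drv (Conj a b) a"
  by (rule drv_lax[OF logical_axioms.L3]) auto
lemma conjE2: "wff a \<Longrightarrow> wff b \<Longrightarrow> drv (Conj a b) b"
  by (rule drv_lax[OF logical_axioms.L4]) auto
lemma dupl: "wff a \<Longrightarrow> drv a (Conj a a)"
  by (rule drv_lax[OF logical_axioms.L5]) auto
lemma disjI1: "wff a \<Longrightarrow> wff b \<Longrightarrow> drv a (Disj a b)"
  by (rule drv_lax[OF logical_axioms.L6]) auto
lemma disjI2: "wff a \<Longrightarrow> wff b \<Longrightarrow> drv b (Disj a b)"
  by (rule drv_lax[OF logical_axioms.L7]) auto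
lemma disj_idem: "wff a \<Longrightarrow> drv (Disj a a) a"
  by (rule drv_lax[OF logical_axioms.L8]) auto
lemma distr: "wff a \<Longrightarrow> wff b \<Longrightarrow> wff c \<Longrightarrow> drv (Conj (Disj a b) c) (Disj (Conj a c) (Conj b c))"
  by (rule drv_lax[OF logical_axioms.L9]) auto
lemma topI: "wff a \<Longrightarrow> drv a Top"
  by (rule drv_lax[OF logical_axioms.L1]) auto
lemma botE: "wff a \<Longrightarrow> drv Bot a"
  by (rule drv_lax[OF logical_axioms.L2]) auto

lemma conjI_d: assumes ab: "drv a b" and ac: "drv a c" shows "drv a (Conj b c)"
proof -
  have w: "wff a" "wff b" "wff c" using drv_wf[OF ab] drv_wf[OF ac] by auto
  have "drv a (Conj a a)" using w by (intro dupl)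
  also have "drv (Conj a a) (Conj b a)" using ab w by (intro drv_conjL)
  also have "drv (Conj b a) (Conj b c)" using ac w by (intro drv_conjR)
  finally show ?thesis .
qed

lemma disjE_d: assumes ac: "drv a c" and bc: "drv b c" shows "drv (Disj a b) c"
proof -
  have w: "wff a" "wff b" "wff c" using drv_wf[OF ac] drv_wf[OF bc] by auto
  have "drv (Disj a b) (Disj c b)" using ac w by (intro drv_disjL)
  also have "drv (Disj c b) (Disj c c)" using bc w by (intro drv_disjR)
  also have "drv (Disj c c) c" using w by (intro disj_idem)
  finally show ?thesis .
qed

lemma conj_comm: "wff a \<Longrightarrow> wff b \<Longrightarrow> drv (Conj a b) (Conj b a)"
  by (intro conjI_d conjE1 conjE2)

lemma disj_comm: "wff a \<Longrightarrow> wff b \<Longrightarrow> drv (Disj a b) (Disj b a)"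
  by (intro disjE_d disjI1 disjI2)

lemma cut_d:
  assumes 1: "drv (Conj p A) B" and 2: "drv A (Disj p B)"
  shows "drv A B"
proof -
  have w: "wff p" "wff A" "wff B" using drv_wf[OF 1] drv_wf[OF 2] by auto
  have "drv A (Conj (Disj p B) A)" using 2 w by (intro conjI_d drefl)
  also have "drv (Conj (Disj p B) A) (Disj (Conj p A) (Conj B A))" using w by (intro distr)
  also have "drv (Disj (Conj p A) (Conj B A)) B" using 1 w by (intro disjE_d conjE1)
  finally show ?thesis .
qed

lemma wff_bigC[simp]: "wff (bigC G) \<longleftrightarrow> (\<forall>g\<in>set G. wff g)"
  by (induction G) auto

lemma wff_bigD[simp]: "wff (bigD G) \<longleftrightarrow> (\<forall>g\<in>set G. wff g)"
  by (induction G) auto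

lemma bigC_mem: "\<forall>g\<in>set G. wff g \<Longrightarrow> g \<in> set G \<Longrightarrow> drv (bigC G) g"
proof (induction G)
  case (Cons h G)
  show ?case
  proof (cases "g = h")
    case True
    have "wff (bigC G)" "wff h" using Cons.prems by auto
    then show ?thesis using True by (simp add: conjE1)
  next
    case False
    then have 1: "drv (bigC G) g" using Cons by auto
    have "wff (bigC G)" "wff h" using Cons.prems by auto
    then have "drv (bigC (h # G)) (bigC G)" by (simp add: conjE2)
    then show ?thesis using 1 by (rule drv_trans)
  qed
qed simp

lemma bigC_intro: "wff A \<Longrightarrow> \<forall>g\<in>set G. drv A g \<Longrightarrow> drv A (bigC G)"
  by (induction G) (auto intro: topI conjI_d)

lemma bigC_mono: "set G \<subseteq> set G' \<Longrightarrow> \<forall>g\<in>set G'. wff g \<Longrightarrow> drv (bigC G') (bigC G)"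
  by (intro bigC_intro) (auto intro: bigC_mem)

lemma bigD_mem: "\<forall>g\<in>set G. wff g \<Longrightarrow> g \<in> set G \<Longrightarrow> drv g (bigD G)"
proof (induction G)
  case (Cons h G)
  show ?case
  proof (cases "g = h")
    case True
    have "wff (bigD G)" "wff h" using Cons.prems by auto
    then show ?thesis using True by (simp add: disjI1)
  next
    case False
    then have 1: "drv g (bigD G)" using Cons by auto
    have "wff (bigD G)" "wff h" using Cons.prems by auto
    then have "drv (bigD G) (bigD (h # G))" by (simp add: disjI2)
    with 1 show ?thesis by (rule drv_trans)
  qed
qed simp

lemma bigD_elim: "wff B \<Longrightarrow> \<forall>g\<in>set G. drv g B \<Longrightarrow> drv (bigD G) B"
  by (induction G) (auto intro: botE disjE_d)

lemma bigD_mono: "set G \<subseteq> set G' \<Longrightarrow> \<forall>g\<in>set G'. wff g \<Longrightarrow> drv (bigD G) (bigD G')"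
  by (intro bigD_elim) (auto intro: bigD_mem)

end


context posl
begin

lemma wff_subst1: "wff \<psi> \<Longrightarrow> wf_trm arF t \<Longrightarrow> wff (subst1 \<psi> x t)"
  unfolding subst1_def by (rule wf_subst) auto

lemma dL10: "substok1 \<phi> x t \<Longrightarrow> wff (subst1 \<phi> x t) \<Longrightarrow> wff \<phi> \<Longrightarrow> drv (subst1 \<phi> x t) (Ex x \<phi>)"
  by (rule drv_lax[OF logical_axioms.L10]) auto
lemma dL11: "y \<notin> fv \<psi> \<Longrightarrow> wff \<psi> \<Longrightarrow> drv (Ex y \<psi>) \<psi>"
  by (rule drv_lax[OF logical_axioms.L11]) auto
lemma dL12: "y \<notin> fv \<chi> \<Longrightarrow> wff \<chi> \<Longrightarrow> wff \<phi> \<Longrightarrow> drv (Conj \<chi> (Ex y \<phi>)) (Ex y (Conj \<chi> \<phi>))"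
  by (rule drv_lax[OF logical_axioms.L12]) auto
lemma dL13: "substok1 \<phi> x t \<Longrightarrow> wf_trm arF t \<Longrightarrow> wf_trm arF s \<Longrightarrow> wff \<phi> \<Longrightarrow> wff (subst1 \<phi> x t) \<Longrightarrow>
    drv (Conj (In t s) (BAll x s \<phi>)) (subst1 \<phi> x t)"
  by (rule drv_lax[OF logical_axioms.L13]) auto
lemma dL14: "y \<notin> fv \<psi> \<Longrightarrow> y \<notin> fv_trm s \<Longrightarrow> wff \<psi> \<Longrightarrow> wf_trm arF s \<Longrightarrow>
    drv \<psi> (BAll y s (Conj \<psi> (In (Var y) s)))"
  by (rule drv_lax[OF logical_axioms.L14]) auto
lemma dL15: "y \<notin> fv \<chi> \<Longrightarrow> wff \<chi> \<Longrightarrow> wff \<phi> \<Longrightarrow> wf_trm arF s \<Longrightarrow>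
    drv (BAll y s (Disj \<chi> \<phi>)) (Disj \<chi> (BAll y s \<phi>))"
  by (rule drv_lax[OF logical_axioms.L15]) auto
lemma dL16: "wf_trm arF s \<Longrightarrow> wf_trm arF t \<Longrightarrow> drv Top (Disj (In s t) (Nin s t))"
  by (rule drv_lax[OF logical_axioms.L16]) auto
lemma dL17: "wf_trm arF s \<Longrightarrow> wf_trm arF t \<Longrightarrow> drv (Conj (In s t) (Nin s t)) Bot"
  by (rule drv_lax[OF logical_axioms.L17]) auto
lemma dL18: "wf_trm arF s \<Longrightarrow> wf_trm arF t \<Longrightarrow> drv Top (Disj (Eq s t) (Neq s t))"
  by (rule drv_lax[OF logical_axioms.L18]) auto
lemma dL19: "wf_trm arF s \<Longrightarrow> wf_trm arF t \<Longrightarrow> drv (Conj (Eq s t) (Neq s t)) Bot"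
  by (rule drv_lax[OF logical_axioms.L19]) auto
lemma dL20: "wf_trm arF t \<Longrightarrow> drv Top (Eq t t)"
  by (rule drv_lax[OF logical_axioms.L20]) auto
lemma dL21: "wf_trm arF s \<Longrightarrow> wf_trm arF t \<Longrightarrow> drv (Eq s t) (Eq t s)"
  by (rule drv_lax[OF logical_axioms.L21]) auto
lemma dL22: "wf_trm arF r \<Longrightarrow> wf_trm arF s \<Longrightarrow> wf_trm arF t \<Longrightarrow> drv (Conj (Eq r s) (Eq s t)) (Eq r t)"
  by (rule drv_lax[OF logical_axioms.L22]) auto
lemma dL23: "substok1 \<phi> a s \<Longrightarrow> substok1 \<phi> a t \<Longrightarrow> wf_trm arF s \<Longrightarrow> wf_trm arF t \<Longrightarrow>
    wff (subst1 \<phi> a s) \<Longrightarrow> wff (subst1 \<phi> a t) \<Longrightarrow>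
    drv (Conj (Eq s t) (subst1 \<phi> a s)) (subst1 \<phi> a t)"
  by (rule drv_lax[OF logical_axioms.L23]) auto

lemma alpha_ex:
  assumes "y \<notin> av \<psi>" "x \<noteq> y" "wff \<psi>"
  shows "drv (Ex x \<psi>) (Ex y (subst1 \<psi> x (Var y)))"
proof -
  let ?p = "subst1 \<psi> x (Var y)"
  have w: "wff ?p" using assms(3) by (simp add: wff_subst1)
  have "drv (subst1 ?p y (Var x)) (Ex y ?p)"
    using ren_ok1[OF assms(1,2)] w by (intro dL10) (simp_all add: wff_subst1)
  then have "drv \<psi> (Ex y ?p)" using ren_back[OF assms(1,2)] by simp
  then have "drv (Ex x \<psi>) (Ex x (Ex y ?p))" by (rule drv_ex)
  also have "drv (Ex x (Ex y ?p)) (Ex y ?p)"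
    using fv_subst1[of \<psi> x y] assms(2) w by (intro dL11) auto
  finally show ?thesis .
qed

lemma exL:
  assumes y: "y \<notin> av (Ex x \<psi>)" "y \<notin> fv A" "y \<notin> fv B"
    and w: "wff \<psi>" "wff A" "wff B"
    and d: "drv (Conj (subst1 \<psi> x (Var y)) (Conj (Ex x \<psi>) A)) B"
  shows "drv (Conj (Ex x \<psi>) A) B"
proof -
  let ?p = "subst1 \<psi> x (Var y)" and ?A = "Conj (Ex x \<psi>) A"
  have wp: "wff ?p" using w by (simp add: wff_subst1)
  have wA: "wff ?A" using w by simp
  have yA: "y \<notin> fv ?A" using y fv_av[of \<psi>] by auto
  have "drv ?A (Conj (Ex x \<psi>) ?A)" using w by (intro conjI_d conjE1 drefl) auto
  also have "drv (Conj (Ex x \<psi>) ?A) (Conj (Ex y ?p) ?A)"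
    using y w by (intro drv_conjL alpha_ex) auto
  also have "drv (Conj (Ex y ?p) ?A) (Conj ?A (Ex y ?p))" using wp wA by (intro conj_comm) auto
  also have "drv (Conj ?A (Ex y ?p)) (Ex y (Conj ?A ?p))" using yA wp wA by (intro dL12)
  also have "drv (Ex y (Conj ?A ?p)) (Ex y B)"
  proof (rule drv_ex)
    have "drv (Conj ?A ?p) (Conj ?p ?A)" using wp wA by (intro conj_comm)
    then show "drv (Conj ?A ?p) B" using d by (rule drv_trans)
  qed
  also have "drv (Ex y B) B" using y w by (intro dL11)
  finally show ?thesis .
qed

lemma ball1:
  assumes "x \<notin> fv_trm s" "y \<notin> av \<psi>" "x \<noteq> y" "wff \<psi>" "wf_trm arF s"
  shows "drv (BAll y s (subst1 \<psi> x (Var y))) (BAll x s \<psi>)"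
proof -
  let ?p = "subst1 \<psi> x (Var y)"
  let ?B = "BAll y s ?p"
  have wp: "wff ?p" using assms by (simp add: wff_subst1)
  have wB: "wff ?B" using wp assms by simp
  have xB: "x \<notin> fv ?B" using assms(1,3) fv_subst1[of \<psi> x y] by auto
  have "drv ?B (BAll x s (Conj ?B (In (Var x) s)))" using xB assms wB by (intro dL14)
  also have "drv (BAll x s (Conj ?B (In (Var x) s))) (BAll x s \<psi>)"
  proof (rule drv_ball)
    have "drv (Conj ?B (In (Var x) s)) (Conj (In (Var x) s) ?B)" using wB assms by (intro conj_comm) auto
    also have "drv (Conj (In (Var x) s) ?B) (subst1 ?p y (Var x))"
      using ren_ok1[OF assms(2,3)] assms wp by (intro dL13) (auto simp: wff_subst1)
    finally show "drv (Conj ?B (In (Var x) s)) \<psi>" using ren_back[OF assms(2,3)] by simp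
  qed (use assms in auto)
  finally show ?thesis .
qed


lemma fv_tsubst1: "fv_trm (tsubst (Var(x := Var w)) s) \<subseteq> (fv_trm s - {x}) \<union> {w}"
  unfolding fv_tsubst by (auto split: if_splits)

lemma alpha_ball:
  assumes a: "y \<notin> av \<psi>" "x \<noteq> y" "y \<notin> fv_trm s" and w: "wff \<psi>" "wf_trm arF s"
  shows "drv (BAll y s (subst1 \<psi> x (Var y))) (BAll x s \<psi>)"
proof (cases "x \<in> fv_trm s")
  case False then show ?thesis using ball1 a w by auto
next
  case True
  let ?p = "subst1 \<psi> x (Var y)"
  let ?B = "BAll y s ?p"
  have wp: "wff ?p" using w by (simp add: wff_subst1)
  have wB: "wff ?B" using wp w by simp
  have fvp: "fv ?p \<subseteq> (fv \<psi> - {x}) \<union> {y}" by (rule fv_subst1)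
  obtain v where v: "v \<notin> av \<psi> \<union> fv_trm s \<union> {x, y}" using fresh_ex[of "av \<psi> \<union> fv_trm s \<union> {x, y}"] by auto
  obtain a where aa: "a \<notin> av \<psi> \<union> fv_trm s \<union> {x, y, v}" using fresh_ex[of "av \<psi> \<union> fv_trm s \<union> {x, y, v}"] by auto
  have avp: "a \<notin> fv ?p" using aa fvp fv_av[of \<psi>] by auto
  have apsi: "a \<notin> fv \<psi>" using aa fv_av[of \<psi>] by auto
  have vB: "v \<notin> fv ?B" using v fvp fv_av[of \<psi>] by auto
  let ?s' = "tsubst (Var(x := Var v)) s"
  have ws': "wf_trm arF ?s'" using w by (intro wf_tsubst) auto
  have fvs': "fv_trm ?s' \<subseteq> (fv_trm s - {x}) \<union> {v}" by (rule fv_tsubst1)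
  let ?E = "Eq (Var v) (Var x) :: ('f,'p) fm"
  let ?s0 = "tsubst (Var(x := Var a)) s"
  have ws0: "wf_trm arF ?s0" using w by (intro wf_tsubst) auto
  have e1: "subst1 (BAll y ?s0 ?p) a (Var x) = ?B"
    using sub_ball[of a s ?p y x "Var x"] aa avp by simp
  have e2: "subst1 (BAll y ?s0 ?p) a (Var v) = BAll y ?s' ?p"
    using sub_ball[of a s ?p y x "Var v"] aa avp by simp
  have e3: "subst1 (BAll x ?s0 \<psi>) a (Var x) = BAll x s \<psi>"
    using sub_ball[of a s \<psi> x x "Var x"] aa apsi by simp
  have e4: "subst1 (BAll x ?s0 \<psi>) a (Var v) = BAll x ?s' \<psi>"
    using sub_ball[of a s \<psi> x x "Var v"] aa apsi by simp
  have "drv ?B (Conj ?B (Eq (Var x) (Var x)))"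
    using wB by (intro conjI_d drefl drv_trans[OF topI dL20]) auto
  also have "drv (Conj ?B (Eq (Var x) (Var x))) (Conj ?B (Ex v ?E))"
  proof (rule drv_conjR)
    have "drv (subst1 ?E v (Var x)) (Ex v ?E)"
      by (rule dL10) (auto simp: substok1_def subst1_def)
    moreover have "subst1 ?E v (Var x) = Eq (Var x) (Var x)" using v by (auto simp: subst1_def)
    ultimately show "drv (Eq (Var x) (Var x)) (Ex v ?E)" by simp
  qed (use wB in auto)
  also have "drv (Conj ?B (Ex v ?E)) (Ex v (Conj ?B ?E))" using vB wB by (intro dL12) auto
  also have "drv (Ex v (Conj ?B ?E)) (Ex v (BAll x s \<psi>))"
  proof (rule drv_ex)
    have "drv (Conj ?B ?E) (Conj ?E (Conj (Eq (Var x) (Var v)) ?B))"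
      using wB by (intro conjI_d conjE2 conjE1 drv_trans[OF conjE2 dL21]) auto
    also have "drv (Conj ?E (Conj (Eq (Var x) (Var v)) ?B)) (Conj ?E (BAll y ?s' ?p))"
    proof (rule drv_conjR)
      have "drv (Conj (Eq (Var x) (Var v)) (subst1 (BAll y ?s0 ?p) a (Var x)))
                 (subst1 (BAll y ?s0 ?p) a (Var v))"
        using avp wB ws' wp by (intro dL23 sub_ball_ok) (auto simp: e1 e2)
      then show "drv (Conj (Eq (Var x) (Var v)) ?B) (BAll y ?s' ?p)" by (simp only: e1 e2)
    qed auto
    also have "drv (Conj ?E (BAll y ?s' ?p)) (Conj ?E (BAll x ?s' \<psi>))"
    proof (rule drv_conjR)
      show "drv (BAll y ?s' ?p) (BAll x ?s' \<psi>)"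
        using fvs' a w ws' v by (intro ball1) auto
    qed auto
    also have "drv (Conj ?E (BAll x ?s' \<psi>)) (BAll x s \<psi>)"
    proof -
      have "drv (Conj (Eq (Var v) (Var x)) (subst1 (BAll x ?s0 \<psi>) a (Var v)))
                 (subst1 (BAll x ?s0 \<psi>) a (Var x))"
        using apsi w ws' by (intro dL23 sub_ball_ok) (auto simp: e3 e4)
      then show ?thesis by (simp only: e3 e4)
    qed
    finally show "drv (Conj ?B ?E) (BAll x s \<psi>)" .
  qed
  also have "drv (Ex v (BAll x s \<psi>)) (BAll x s \<psi>)"
    using v fv_av[of \<psi>] w by (intro dL11) auto
  finally show ?thesis .
qed

lemma ballR:
  assumes y: "y \<notin> av (BAll x s \<psi>)" "y \<notin> fv A" "y \<notin> fv B"
    and w: "wff \<psi>" "wf_trm arF s" "wff A" "wff B"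
    and d: "drv (Conj (In (Var y) s) A) (Disj (subst1 \<psi> x (Var y)) (Disj (BAll x s \<psi>) B))"
  shows "drv A (Disj (BAll x s \<psi>) B)"
proof -
  let ?p = "subst1 \<psi> x (Var y)" and ?f = "BAll x s \<psi>"
  let ?D = "Disj ?f B"
  have wp: "wff ?p" using w by (simp add: wff_subst1)
  have wD: "wff ?D" using w by simp
  have yD: "y \<notin> fv ?D" using y fv_av[of \<psi>] by auto
  have "drv A (BAll y s (Conj A (In (Var y) s)))" using y w by (intro dL14) auto
  also have "drv (BAll y s (Conj A (In (Var y) s))) (BAll y s (Disj ?D ?p))"
  proof (rule drv_ball)
    have "drv (Conj A (In (Var y) s)) (Conj (In (Var y) s) A)" using w by (intro conj_comm) auto
    also note d
    also have "drv (Disj ?p ?D) (Disj ?D ?p)" using wp wD by (intro disj_comm)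
    finally show "drv (Conj A (In (Var y) s)) (Disj ?D ?p)" .
  qed (use w in auto)
  also have "drv (BAll y s (Disj ?D ?p)) (Disj ?D (BAll y s ?p))" using yD wD wp w by (intro dL15)
  also have "drv (Disj ?D (BAll y s ?p)) (Disj ?D ?f)"
    using y w wD by (intro drv_disjR alpha_ball) auto
  also have "drv (Disj ?D ?f) ?D" using wD w by (intro disjE_d drefl disjI1) auto
  finally show ?thesis .
qed

end


section \<open>Construction\<close>

definition vset :: "('f,'p) fm list \<times> ('f,'p) fm list \<Rightarrow> nat set" where
  "vset st = (\<Union>g\<in>set (fst st) \<union> set (snd st). av g)"

lemma finite_vset[simp]: "finite (vset st)"
  unfolding vset_def by auto

definition wit :: "nat \<Rightarrow> ('f,'p) fm list \<times> ('f,'p) fm list \<Rightarrow> ('f,'p) fm \<Rightarrow> nat" where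
  "wit n st \<phi> = Suc (Max ({n} \<union> vset st \<union> av \<phi>))"

lemma wit_props:
  "wit n st \<phi> \<notin> vset st" "wit n st \<phi> \<notin> av \<phi>" "n < wit n st \<phi>"
proof -
  have f: "finite ({n} \<union> vset st \<union> av \<phi>)" by simp
  have "\<And>k. k \<in> {n} \<union> vset st \<union> av \<phi> \<Longrightarrow> k < wit n st \<phi>"
    unfolding wit_def using Max_ge[OF f] by (simp add: le_imp_less_Suc)
  then show "wit n st \<phi> \<notin> vset st" "wit n st \<phi> \<notin> av \<phi>" "n < wit n st \<phi>" by auto
qed

locale constr = posl arF arP Ax
  for arF :: "'f::countable \<Rightarrow> nat" and arP :: "'p::countable \<Rightarrow> nat" and Ax +
  fixes \<chi> \<chi>' :: "('f,'p) fm"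
  assumes wchi: "wff \<chi>" "wff \<chi>'" and notdrv: "\<not> drv \<chi> \<chi>'"
begin

definition consis :: "('f,'p) fm list \<Rightarrow> ('f,'p) fm list \<Rightarrow> bool" where
  "consis G D = (\<not> drv (bigC G) (bigD D))"

definition step :: "nat \<Rightarrow> ('f,'p) fm list \<times> ('f,'p) fm list \<Rightarrow> ('f,'p) fm \<Rightarrow> ('f,'p) fm list \<times> ('f,'p) fm list" where
  "step n st \<phi> = (let G = fst st; D = snd st; y = wit n st \<phi> in
     if \<not> wff \<phi> then st
     else if consis (\<phi> # G) D then
       (case \<phi> of Ex x \<psi> \<Rightarrow> (subst1 \<psi> x (Var y) # \<phi> # G, D) | _ \<Rightarrow> (\<phi> # G, D))
     else
       (case \<phi> of BAll x s \<psi> \<Rightarrow> (In (Var y) s # G, subst1 \<psi> x (Var y) # \<phi> # D) | _ \<Rightarrow> (G, \<phi> # D)))"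

fun stage :: "nat \<Rightarrow> ('f,'p) fm list \<times> ('f,'p) fm list" where
  "stage 0 = ([\<chi>], [\<chi>'])"
| "stage (Suc n) = step n (stage n) (from_nat n)"

lemma step_mono: "set (fst st) \<subseteq> set (fst (step n st \<phi>)) \<and> set (snd st) \<subseteq> set (snd (step n st \<phi>))"
  unfolding step_def Let_def by (cases \<phi>) auto

lemma step_has: "wff \<phi> \<Longrightarrow> \<phi> \<in> set (fst (step n st \<phi>)) \<or> \<phi> \<in> set (snd (step n st \<phi>))"
  unfolding step_def Let_def by (cases \<phi>) auto

lemma step_wf:
  assumes "\<forall>g\<in>set (fst st) \<union> set (snd st). wff g"
  shows "\<forall>g\<in>set (fst (step n st \<phi>)) \<union> set (snd (step n st \<phi>)). wff g"
  using assms unfolding step_def Let_def by (cases \<phi>) (auto simp: wff_subst1)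

lemma cut_consis: "consis G D \<Longrightarrow> \<not> consis (\<phi> # G) D \<Longrightarrow> consis G (\<phi> # D)"
  unfolding consis_def using cut_d by auto

lemma step_consis:
  assumes wf: "\<forall>g\<in>set (fst st) \<union> set (snd st). wff g" and c: "consis (fst st) (snd st)"
  shows "consis (fst (step n st \<phi>)) (snd (step n st \<phi>))"
proof -
  obtain G D where st: "st = (G, D)" by (cases st)
  let ?y = "wit n st \<phi>"
  have yG: "?y \<notin> fv (bigC G)" and yD: "?y \<notin> fv (bigD D)" and yphi: "?y \<notin> av \<phi>"
    using wit_props[of n st \<phi>] fv_av unfolding fv_bigC fv_bigD vset_def st by fastforce+
  have wG: "wff (bigC G)" and wD: "wff (bigD D)" using wf st by auto
  show ?thesis
  proof (cases "wff \<phi>")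
    case False then show ?thesis using c unfolding step_def by simp
  next
    case w: True
    show ?thesis
    proof (cases "consis (\<phi> # G) D")
      case True
      show ?thesis
      proof (cases \<phi>)
        case (Ex x \<psi>)
        have "consis (subst1 \<psi> x (Var ?y) # \<phi> # G) D"
          unfolding consis_def
        proof
          assume "drv (bigC (subst1 \<psi> x (Var ?y) # \<phi> # G)) (bigD D)"
          then have "drv (Conj (Ex x \<psi>) (bigC G)) (bigD D)"
            using yG yD yphi w wG wD Ex by (intro exL) auto
          then show False using True Ex unfolding consis_def by simp
        qed
        then show ?thesis using w True Ex st unfolding step_def by simp
      qed (use w True st in \<open>simp_all add: step_def\<close>)
    next
      case False
      then have c2: "consis G (\<phi> # D)" using c st cut_consis by auto
      show ?thesis
      proof (cases \<phi>)
        case (BAll x s \<psi>)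
        have "consis (In (Var ?y) s # G) (subst1 \<psi> x (Var ?y) # \<phi> # D)"
          unfolding consis_def
        proof
          assume "drv (bigC (In (Var ?y) s # G)) (bigD (subst1 \<psi> x (Var ?y) # \<phi> # D))"
          then have "drv (bigC G) (Disj (BAll x s \<psi>) (bigD D))"
            using yG yD yphi w wG wD BAll by (intro ballR) auto
          then show False using c2 BAll unfolding consis_def by simp
        qed
        then show ?thesis using w False BAll st unfolding step_def by (simp add: Let_def)
      qed (use w False st c2 in \<open>simp_all add: step_def\<close>)
    qed
  qed
qed

lemma stage_inv: "(\<forall>g\<in>set (fst (stage n)) \<union> set (snd (stage n)). wff g) \<and> consis (fst (stage n)) (snd (stage n))"
proof (induction n)
  case 0
  have "\<not> drv (Conj \<chi> Top) (Disj \<chi>' Bot)"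
  proof
    assume d: "drv (Conj \<chi> Top) (Disj \<chi>' Bot)"
    have "drv \<chi> (Conj \<chi> Top)" using wchi by (intro conjI_d drefl topI)
    also note d
    also have "drv (Disj \<chi>' Bot) \<chi>'" using wchi by (intro disjE_d drefl botE)
    finally show False using notdrv by simp
  qed
  then show ?case using wchi unfolding consis_def by simp
next
  case (Suc n)
  then show ?case using step_wf[of "stage n" n "from_nat n"] step_consis[of "stage n" n "from_nat n"] by simp
qed

lemma stage_mono: "m \<le> n \<Longrightarrow> set (fst (stage m)) \<subseteq> set (fst (stage n)) \<and> set (snd (stage m)) \<subseteq> set (snd (stage n))"
proof (induction n)
  case (Suc n)
  then show ?case using step_mono[of "stage n" n "from_nat n"] by (cases "m = Suc n") auto
qed simp

definition FF where "FF = (\<Union>n. set (fst (stage n)))"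
definition DD where "DD = (\<Union>n. set (snd (stage n)))"

lemma FF_wff: "\<phi> \<in> FF \<Longrightarrow> wff \<phi>" and DD_wff: "\<phi> \<in> DD \<Longrightarrow> wff \<phi>"
  unfolding FF_def DD_def using stage_inv by blast+

lemma finite_in_stage:
  assumes "finite S" "S \<subseteq> FF" "finite T" "T \<subseteq> DD"
  shows "\<exists>n. S \<subseteq> set (fst (stage n)) \<and> T \<subseteq> set (snd (stage n))"
proof -
  have "\<exists>n. S \<subseteq> set (fst (stage n))" using assms(1,2)
  proof (induction rule: finite_induct)
    case (insert x F)
    then obtain n where n: "F \<subseteq> set (fst (stage n))" by auto
    obtain m where m: "x \<in> set (fst (stage m))" using insert unfolding FF_def by auto
    show ?case using n m stage_mono[of n "max n m"] stage_mono[of m "max n m"] by (intro exI[of _ "max n m"]) auto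
  qed simp
  moreover have "\<exists>n. T \<subseteq> set (snd (stage n))" using assms(3,4)
  proof (induction rule: finite_induct)
    case (insert x F)
    then obtain n where n: "F \<subseteq> set (snd (stage n))" by auto
    obtain m where m: "x \<in> set (snd (stage m))" using insert unfolding DD_def by auto
    show ?case using n m stage_mono[of n "max n m"] stage_mono[of m "max n m"] by (intro exI[of _ "max n m"]) auto
  qed simp
  ultimately obtain n m where "S \<subseteq> set (fst (stage n))" "T \<subseteq> set (snd (stage m))" by auto
  then show ?thesis using stage_mono[of n "max n m"] stage_mono[of m "max n m"] by (intro exI[of _ "max n m"]) auto
qed

lemma FF_DD_consis: "set G \<subseteq> FF \<Longrightarrow> set D \<subseteq> DD \<Longrightarrow> \<not> drv (bigC G) (bigD D)"
proof
  assume G: "set G \<subseteq> FF" and D: "set D \<subseteq> DD" and d: "drv (bigC G) (bigD D)"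
  obtain n where n: "set G \<subseteq> set (fst (stage n))" "set D \<subseteq> set (snd (stage n))"
    using finite_in_stage[of "set G" "set D"] G D by auto
  have inv: "\<forall>g\<in>set (fst (stage n)) \<union> set (snd (stage n)). wff g" "consis (fst (stage n)) (snd (stage n))"
    using stage_inv by auto
  have "drv (bigC (fst (stage n))) (bigC G)" using n inv by (intro bigC_mono) auto
  also note d
  also have "drv (bigD D) (bigD (snd (stage n)))" using n inv by (intro bigD_mono) auto
  finally show False using inv unfolding consis_def by simp
qed

lemma decided: "wff \<phi> \<Longrightarrow> \<phi> \<in> FF \<or> \<phi> \<in> DD"
proof -
  assume w: "wff \<phi>"
  have "stage (Suc (to_nat \<phi>)) = step (to_nat \<phi>) (stage (to_nat \<phi>)) \<phi>" by simp
  then show ?thesis using step_has[OF w] unfolding FF_def DD_def by (metis UN_I UNIV_I)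
qed

lemma FF_DD_disj: "\<phi> \<in> FF \<Longrightarrow> \<phi> \<notin> DD"
proof
  assume a: "\<phi> \<in> FF" "\<phi> \<in> DD"
  have w: "wff \<phi>" using a FF_wff by auto
  have "drv (bigC [\<phi>]) (bigD [\<phi>])" using w by (auto intro: drv_trans[OF conjE1 disjI1])
  then show False using FF_DD_consis[of "[\<phi>]" "[\<phi>]"] a by auto
qed

lemma FF_closed: "set G \<subseteq> FF \<Longrightarrow> drv (bigC G) b \<Longrightarrow> b \<in> FF"
proof (rule ccontr)
  assume G: "set G \<subseteq> FF" and d: "drv (bigC G) b" and nb: "b \<notin> FF"
  have w: "wff b" using drv_wf[OF d] by simp
  then have "b \<in> DD" using decided nb by auto
  moreover have "drv (bigC G) (bigD [b])" using d w by (auto intro: drv_trans[OF _ disjI1])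
  ultimately show False using FF_DD_consis[of G "[b]"] G by auto
qed

lemma FF_mp1: "a \<in> FF \<Longrightarrow> drv a b \<Longrightarrow> b \<in> FF"
proof -
  assume a: "a \<in> FF" "drv a b"
  have "drv (Conj a Top) a" using FF_wff[OF a(1)] by (intro conjE1) auto
  then have "drv (bigC [a]) b" using a(2) by (auto intro: drv_trans)
  then show ?thesis using FF_closed[of "[a]" b] a by auto
qed

lemma FF_mp2: "a \<in> FF \<Longrightarrow> b \<in> FF \<Longrightarrow> drv (Conj a b) c \<Longrightarrow> c \<in> FF"
proof -
  assume a: "a \<in> FF" "b \<in> FF" "drv (Conj a b) c"
  have w: "wff a" "wff b" using a FF_wff by auto
  have "drv (bigC [a, b]) (Conj a b)" using w
    by (auto intro!: conjI_d conjE1 drv_trans[OF conjE2 conjE1])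
  then show ?thesis using FF_closed[of "[a,b]" c] a by (auto intro: drv_trans)
qed

lemma chi_FF: "\<chi> \<in> FF" and chi'_DD: "\<chi>' \<in> DD"
  unfolding FF_def DD_def by (metis UN_I UNIV_I list.set_intros(1) stage.simps(1) fst_conv snd_conv)+

lemma Top_FF: "Top \<in> FF"
  using FF_mp1[OF chi_FF topI[OF wchi(1)]] .

lemma Bot_FF: "Bot \<notin> FF"
  using FF_DD_disj[of \<chi>'] chi'_DD FF_mp1[of Bot \<chi>'] botE[OF wchi(2)] by auto

lemma FF_conj: "wff (Conj a b) \<Longrightarrow> Conj a b \<in> FF \<longleftrightarrow> a \<in> FF \<and> b \<in> FF"
proof -
  assume w: "wff (Conj a b)"
  then have wa: "wff a" "wff b" by auto
  show ?thesis
  proof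
    assume "Conj a b \<in> FF"
    then show "a \<in> FF \<and> b \<in> FF" using FF_mp1 conjE1[OF wa] conjE2[OF wa] by blast
  next
    assume "a \<in> FF \<and> b \<in> FF"
    then show "Conj a b \<in> FF" using FF_mp2 drefl[OF w] by blast
  qed
qed

lemma FF_disj: "wff (Disj a b) \<Longrightarrow> Disj a b \<in> FF \<longleftrightarrow> a \<in> FF \<or> b \<in> FF"
proof
  assume w: "wff (Disj a b)" and d: "Disj a b \<in> FF"
  show "a \<in> FF \<or> b \<in> FF"
  proof (rule ccontr)
    assume "\<not> (a \<in> FF \<or> b \<in> FF)"
    then have "a \<in> DD" "b \<in> DD" using decided w by auto
    moreover have "drv (bigC [Disj a b]) (bigD [a, b])" using w
      by (auto intro!: drv_trans[OF conjE1] disjE_d disjI1 drv_trans[OF disjI1 disjI2])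
    ultimately show False using FF_DD_consis[of "[Disj a b]" "[a, b]"] d by auto
  qed
next
  assume w: "wff (Disj a b)" and "a \<in> FF \<or> b \<in> FF"
  then show "Disj a b \<in> FF" by (auto intro: FF_mp1 disjI1 disjI2)
qed


lemma FF_ex:
  assumes "Ex x \<psi> \<in> FF"
  shows "subst1 \<psi> x (Var (wit (to_nat (Ex x \<psi>)) (stage (to_nat (Ex x \<psi>))) (Ex x \<psi>))) \<in> FF"
proof -
  let ?f = "Ex x \<psi>" let ?n = "to_nat ?f" let ?st = "stage ?n"
  let ?y = "wit ?n ?st ?f"
  have w: "wff ?f" using assms FF_wff by blast
  have st: "stage (Suc ?n) = step ?n ?st ?f" by simp
  show ?thesis
  proof (cases "consis (?f # fst ?st) (snd ?st)")
    case True
    then have "subst1 \<psi> x (Var ?y) \<in> set (fst (stage (Suc ?n)))"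
      using w st unfolding step_def by (simp add: Let_def)
    then show ?thesis unfolding FF_def by blast
  next
    case False
    then have "?f \<in> set (snd (stage (Suc ?n)))"
      using w st unfolding step_def by (simp add: Let_def)
    then have "?f \<in> DD" unfolding DD_def by blast
    then show ?thesis using assms FF_DD_disj by blast
  qed
qed

lemma FF_ball:
  assumes w: "wff (BAll x s \<psi>)" and n: "BAll x s \<psi> \<notin> FF"
  shows "\<exists>y. y \<notin> av (BAll x s \<psi>) \<and> In (Var y) s \<in> FF \<and> subst1 \<psi> x (Var y) \<notin> FF"
proof -
  let ?f = "BAll x s \<psi>" let ?n = "to_nat ?f" let ?st = "stage ?n"
  let ?y = "wit ?n ?st ?f"
  have st: "stage (Suc ?n) = step ?n ?st ?f" by simp
  show ?thesis
  proof (cases "consis (?f # fst ?st) (snd ?st)")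
    case True
    then have "?f \<in> set (fst (stage (Suc ?n)))"
      using w st unfolding step_def by (simp add: Let_def)
    then have "?f \<in> FF" unfolding FF_def by blast
    then show ?thesis using n by blast
  next
    case False
    then have "In (Var ?y) s \<in> set (fst (stage (Suc ?n)))" "subst1 \<psi> x (Var ?y) \<in> set (snd (stage (Suc ?n)))"
      using w st unfolding step_def by (simp_all add: Let_def)
    then have "In (Var ?y) s \<in> FF" "subst1 \<psi> x (Var ?y) \<in> DD" unfolding FF_def DD_def by blast+
    then show ?thesis using wit_props(2)[of ?n ?st ?f] FF_DD_disj by blast
  qed
qed

lemma eq_refl: "wf_trm arF t \<Longrightarrow> Eq t t \<in> FF"
  using FF_mp1[OF Top_FF dL20] by blast

lemma eq_wf: "Eq s t \<in> FF \<Longrightarrow> wf_trm arF s \<and> wf_trm arF t"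
  using FF_wff[of "Eq s t"] by simp

lemma eq_sym: "Eq s t \<in> FF \<Longrightarrow> Eq t s \<in> FF"
  using FF_mp1 dL21 eq_wf by blast

lemma eq_trans: "Eq r s \<in> FF \<Longrightarrow> Eq s t \<in> FF \<Longrightarrow> Eq r t \<in> FF"
  using FF_mp2 dL22 eq_wf by blast

lemma FF_L23:
  assumes "Eq s t \<in> FF" "substok1 \<phi> a s" "substok1 \<phi> a t" "wff (subst1 \<phi> a s)" "wff (subst1 \<phi> a t)"
    "subst1 \<phi> a s \<in> FF"
  shows "subst1 \<phi> a t \<in> FF"
  using FF_mp2[OF assms(1,6) dL23] assms eq_wf by blast

lemma term_wit: assumes "wf_trm arF t" shows "\<exists>m. Eq (Var m) t \<in> FF"
proof -
  obtain y where y: "y \<notin> fv_trm t" using fresh_ex[of "fv_trm t"] by auto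
  let ?E = "Eq (Var y) t :: ('f,'p) fm"
  have e: "subst1 ?E y u = Eq u t" for u
    using y by (auto simp: subst1_def intro: tsubst_cong[where \<sigma>'=Var, simplified])
  have "drv (subst1 ?E y t) (Ex y ?E)" using assms by (intro dL10) (auto simp: substok1_def e)
  then have "Ex y ?E \<in> FF" using FF_mp1[OF eq_refl[OF assms]] e by simp
  from FF_ex[OF this] show ?thesis unfolding e by blast
qed

lemma class_inf:
  assumes "finite S"
  shows "\<exists>w. w \<notin> S \<and> Eq (Var w) (Var z) \<in> FF"
proof -
  define E where "E y = (Ex y (Eq (Var y) (Var z)) :: ('f,'p) fm)" for y
  have e: "subst1 (Eq (Var y) (Var z) :: ('f,'p) fm) y u = Eq u (Var z)" if "y \<noteq> z" for y u
    using that by (simp add: subst1_def)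
  have EF: "E y \<in> FF" if "y \<noteq> z" for y
  proof -
    have "drv (subst1 (Eq (Var y) (Var z) :: ('f,'p) fm) y (Var z)) (E y)"
      unfolding E_def by (intro dL10) (auto simp: substok1_def subst1_def)
    then show ?thesis using FF_mp1[OF eq_refl[of "Var z"]] e[OF that] by simp
  qed
  have inj: "inj_on (\<lambda>y. to_nat (E y)) {y. y \<noteq> z}"
    by (rule inj_onI) (simp add: E_def)
  have "infinite {y::nat. y \<noteq> z}" by (simp add: infinite_UNIV_nat)
  then have inf: "infinite ((\<lambda>y. to_nat (E y)) ` {y. y \<noteq> z})" using finite_imageD inj by blast
  define k where "k = Suc (Max (insert 0 S))"
  have k: "S \<subseteq> {..<k}" using assms Max_ge[of "insert 0 S"] by (auto simp: k_def less_Suc_eq_le)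
  obtain n where n: "n > k" "n \<in> (\<lambda>y. to_nat (E y)) ` {y. y \<noteq> z}"
    using inf unfolding infinite_nat_iff_unbounded by blast
  then obtain y where y: "y \<noteq> z" "n = to_nat (E y)" by auto
  let ?w = "wit (to_nat (E y)) (stage (to_nat (E y))) (E y)"
  have "subst1 (Eq (Var y) (Var z)) y (Var ?w) \<in> FF"
    using FF_ex[of y "Eq (Var y) (Var z)"] EF[OF y(1)] unfolding E_def by simp
  then have "Eq (Var ?w) (Var z) \<in> FF" using e[OF y(1)] by simp
  moreover have "?w \<notin> S"
  proof
    assume "?w \<in> S"
    then have "?w < k" using k by auto
    moreover have "to_nat (E y) < ?w" by (rule wit_props(3))
    ultimately show False using n y by simp
  qed
  ultimately show ?thesis by blast
qed

lemma cong_gen: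
  fixes K :: "'f trm list \<Rightarrow> ('f,'p) fm"
  assumes fX: "finite X"
    and K1: "\<And>l a u. a \<notin> X \<Longrightarrow> subst1 (K l) a u = K (map (tsubst (Var(a := u))) l)"
    and K2: "\<And>l a u. substok1 (K l) a u"
    and K3: "\<And>l. wff (K l) \<longleftrightarrow> length l = N \<and> (\<forall>t\<in>set l. wf_trm arF t)"
  shows "list_all2 (\<lambda>s t. Eq s t \<in> FF) ts ts' \<Longrightarrow> K (pre @ ts) \<in> FF \<Longrightarrow> K (pre @ ts') \<in> FF"
proof (induction ts ts' arbitrary: pre rule: list_all2_induct)
  case Nil then show ?case by simp
next
  case (Cons t ts t' ts')
  let ?V = "X \<union> (\<Union>u\<in>set pre. fv_trm u) \<union> (\<Union>u\<in>set ts. fv_trm u)"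
  obtain a where a: "a \<notin> ?V" using fresh_ex[of ?V] fX by auto
  have m: "map (tsubst (Var(a := u))) (pre @ Var a # ts) = pre @ u # ts" for u
  proof -
    have "map (tsubst (Var(a := u))) pre = pre"
      using a by (intro map_idI) (auto intro: tsubst_triv)
    moreover have "map (tsubst (Var(a := u))) ts = ts"
      using a by (intro map_idI) (auto intro: tsubst_triv)
    ultimately show ?thesis by simp
  qed
  have s: "subst1 (K (pre @ Var a # ts)) a u = K (pre @ u # ts)" for u
    using K1[of a "pre @ Var a # ts" u] a m by simp
  have wK: "wff (K (pre @ t # ts))" using Cons.prems FF_wff by simp
  have wt: "wf_trm arF t \<and> wf_trm arF t'" using eq_wf[OF Cons.hyps(1)] .
  have wK': "wff (K (pre @ t' # ts))" using wK wt unfolding K3 by auto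
  have "subst1 (K (pre @ Var a # ts)) a t' \<in> FF"
    by (rule FF_L23[OF Cons.hyps(1) K2 K2]) (use wK wK' Cons.prems in \<open>simp_all add: s\<close>)
  then have "K ((pre @ [t']) @ ts) \<in> FF" using s by simp
  then have "K ((pre @ [t']) @ ts') \<in> FF" by (rule Cons.IH)
  then show ?case by simp
qed

end


section \<open>The term model\<close>

locale model = constr arF arP Ax \<chi> \<chi>'
  for arF :: "'f::countable \<Rightarrow> nat" and arP :: "'p::countable \<Rightarrow> nat" and Ax \<chi> \<chi>' +
  fixes enc :: "nat \<Rightarrow> 'u"
  assumes inj_enc: "inj enc"
begin

definition mt :: "'f trm \<Rightarrow> nat" where "mt t = (LEAST m. Eq (Var m) t \<in> FF)"
definition cl :: "'f trm \<Rightarrow> 'u" where "cl t = enc (mt t)"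
definition MM :: "('u,'f,'p) struc" where
  "MM = \<lparr>dom = range (\<lambda>z. cl (Var z)), fint = (\<lambda>f us. cl (Fn f (map (\<lambda>u. Var (inv enc u)) us))),
        pint = (\<lambda>P us. Atom P (map (\<lambda>u. Var (inv enc u)) us) \<in> FF)\<rparr>"
definition rho0 :: "nat \<Rightarrow> 'u" where "rho0 z = cl (Var z)"

lemma mt_spec: "wf_trm arF t \<Longrightarrow> Eq (Var (mt t)) t \<in> FF"
  unfolding mt_def using term_wit by (metis LeastI_ex)

lemma cl_eq: assumes "wf_trm arF s" "wf_trm arF t" shows "cl s = cl t \<longleftrightarrow> Eq s t \<in> FF"
proof
  assume "cl s = cl t"
  then have "mt s = mt t" unfolding cl_def using inj_enc by (simp add: inj_eq)
  then show "Eq s t \<in> FF" using mt_spec[OF assms(1)] mt_spec[OF assms(2)] eq_sym eq_trans by metis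
next
  assume e: "Eq s t \<in> FF"
  have "\<And>m. Eq (Var m) s \<in> FF \<longleftrightarrow> Eq (Var m) t \<in> FF"
    using e eq_sym eq_trans by metis
  then show "cl s = cl t" unfolding cl_def mt_def by simp
qed

lemma inv_cl: "inv enc (cl t) = mt t"
  unfolding cl_def using inj_enc by simp

lemma cl_var: "wf_trm arF t \<Longrightarrow> cl t = cl (Var (mt t))"
  using cl_eq[of t "Var (mt t)"] mt_spec eq_sym by simp

lemma dom_MM: "dom MM = range (\<lambda>z. cl (Var z))"
  unfolding MM_def by simp

lemma fint_MM: "fint MM = (\<lambda>f us. cl (Fn f (map (\<lambda>u. Var (inv enc u)) us)))"
  unfolding MM_def by simp

lemma pint_MM: "pint MM = (\<lambda>P us. Atom P (map (\<lambda>u. Var (inv enc u)) us) \<in> FF)"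
  unfolding MM_def by simp

lemma atom_cong: "list_all2 (\<lambda>s t. Eq s t \<in> FF) ts ts' \<Longrightarrow> Atom P ts \<in> FF \<Longrightarrow> Atom P ts' \<in> FF"
  using cong_gen[of "{}" "Atom P" "parity arP P" ts ts' "[]"]
  by (auto simp: subst1_def substok1_def)

lemma fn_cong:
  assumes "list_all2 (\<lambda>s t. Eq s t \<in> FF) ts ts'" "wf_trm arF (Fn f ts)"
  shows "Eq (Fn f ts) (Fn f ts') \<in> FF"
proof -
  let ?X = "\<Union>u\<in>set ts. fv_trm u"
  have K1: "subst1 (Eq (Fn f ts) (Fn f l)) a u = Eq (Fn f ts) (Fn f (map (tsubst (Var(a := u))) l))"
    if "a \<notin> ?X" for l a u
  proof -
    have "map (tsubst (Var(a := u))) ts = ts" using that by (intro map_idI) (auto intro: tsubst_triv)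
    then show ?thesis by (simp add: subst1_def)
  qed
  have K3: "wff (Eq (Fn f ts) (Fn f l)) \<longleftrightarrow> length l = arF f \<and> (\<forall>t\<in>set l. wf_trm arF t)" for l
    using assms(2) by auto
  have "Eq (Fn f ts) (Fn f ([] @ ts)) \<in> FF" using eq_refl assms(2) by simp
  then show ?thesis
    using cong_gen[of ?X "\<lambda>l. Eq (Fn f ts) (Fn f l)" "arF f" ts ts' "[]", OF _ K1 _ K3] assms(1)
    by (auto simp: substok1_def)
qed

lemma la2_mt: "(\<forall>t\<in>set ts. wf_trm arF t) \<Longrightarrow> list_all2 (\<lambda>s t. Eq s t \<in> FF) (map (\<lambda>t. Var (mt t)) ts) ts"
  by (induction ts) (auto intro: mt_spec)

lemma la2_mt': "(\<forall>t\<in>set ts. wf_trm arF t) \<Longrightarrow> list_all2 (\<lambda>s t. Eq s t \<in> FF) ts (map (\<lambda>t. Var (mt t)) ts)"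
  by (induction ts) (auto intro: mt_spec eq_sym)

lemma eval_cl: "wf_trm arF t \<Longrightarrow> eval MM rho0 t = cl t"
proof (induction t)
  case (Var x) then show ?case by (simp add: rho0_def)
next
  case (Fn f ts)
  have m: "map (\<lambda>u. Var (inv enc u)) (map (eval MM rho0) ts) = map (\<lambda>t. Var (mt t)) ts"
    using Fn by (auto simp: inv_cl)
  have "eval MM rho0 (Fn f ts) = cl (Fn f (map (\<lambda>t. Var (mt t)) ts))"
    by (simp only: eval.simps fint_MM m)
  also have "\<dots> = cl (Fn f ts)"
    using Fn.prems by (subst cl_eq) (auto intro!: fn_cong la2_mt)
  finally show ?case .
qed

lemma sat_atom: "wff (Atom P ts) \<Longrightarrow> sat MM rho0 (Atom P ts) \<longleftrightarrow> Atom P ts \<in> FF"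
proof -
  assume w: "wff (Atom P ts)"
  then have wt: "\<forall>t\<in>set ts. wf_trm arF t" by simp
  have m: "map (\<lambda>u. Var (inv enc u)) (map (eval MM rho0) ts) = map (\<lambda>t. Var (mt t)) ts"
    using wt eval_cl by (auto simp: inv_cl)
  have "sat MM rho0 (Atom P ts) \<longleftrightarrow> Atom P (map (\<lambda>t. Var (mt t)) ts) \<in> FF"
    by (simp only: sat.simps pint_MM m)
  also have "\<dots> \<longleftrightarrow> Atom P ts \<in> FF"
    using atom_cong[OF la2_mt[OF wt]] atom_cong[OF la2_mt'[OF wt]] by blast
  finally show ?thesis .
qed

lemma sat_ren:
  assumes "w \<notin> av \<psi>"
  shows "sat MM rho0 (subst1 \<psi> x (Var w)) \<longleftrightarrow> sat MM (rho0(x := cl (Var w))) \<psi>"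
proof -
  have "sat MM rho0 (subst1 \<psi> x (Var w)) = sat MM (\<lambda>v. eval MM rho0 ((Var(x := Var w)) v)) \<psi>"
    using ren_fwd_ok[OF assms, of x] unfolding subst1_def substok1_def by (rule sat_subst)
  also have "(\<lambda>v. eval MM rho0 ((Var(x := Var w)) v)) = rho0(x := cl (Var w))"
    by (auto simp: rho0_def)
  finally show ?thesis .
qed

lemma pick: "finite S \<Longrightarrow> \<exists>w. w \<notin> S \<and> cl (Var w) = cl (Var z)"
  using class_inf[of S z] cl_eq by auto

lemma in_sat: "wf_trm arF s \<Longrightarrow> pint MM PIn [cl (Var z), eval MM rho0 s] \<longleftrightarrow> In (Var z) s \<in> FF"
  using sat_atom[of PIn "[Var z, s]"] by (simp add: rho0_def)

lemma truth: "wff \<phi> \<Longrightarrow> sat MM rho0 \<phi> \<longleftrightarrow> \<phi> \<in> FF"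
proof (induction "fsize \<phi>" arbitrary: \<phi> rule: less_induct)
  case less
  show ?case
  proof (cases \<phi>)
    case Top then show ?thesis using Top_FF by simp
  next
    case Bot then show ?thesis using Bot_FF by simp
  next
    case (Atom P ts) then show ?thesis using sat_atom less.prems by simp
  next
    case (Conj a b)
    then show ?thesis using less FF_conj by simp
  next
    case (Disj a b)
    then show ?thesis using less FF_disj by simp
  next
    case (Ex x \<psi>)
    have w: "wff \<psi>" using less.prems Ex by simp
    have IH: "\<And>w. sat MM rho0 (subst1 \<psi> x (Var w)) \<longleftrightarrow> subst1 \<psi> x (Var w) \<in> FF"
      using less.hyps Ex w by (simp add: subst1_def wf_subst)
    show ?thesis
    proof
      assume "sat MM rho0 \<phi>"
      then obtain d where d: "d \<in> dom MM" "sat MM (rho0(x := d)) \<psi>" using Ex by auto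
      then obtain z where z: "d = cl (Var z)" unfolding dom_MM by auto
      obtain v where v: "v \<notin> av \<psi>" "cl (Var v) = cl (Var z)" using pick[of "av \<psi>" z] by auto
      have "sat MM rho0 (subst1 \<psi> x (Var v))" using sat_ren[OF v(1)] d z v by simp
      then have "subst1 \<psi> x (Var v) \<in> FF" using IH by blast
      moreover have "drv (subst1 \<psi> x (Var v)) (Ex x \<psi>)"
        using ren_fwd_ok[OF v(1)] w by (intro dL10) (auto simp: wff_subst1)
      ultimately show "\<phi> \<in> FF" using FF_mp1 Ex by blast
    next
      assume "\<phi> \<in> FF"
      let ?y = "wit (to_nat (Ex x \<psi>)) (stage (to_nat (Ex x \<psi>))) (Ex x \<psi>)"
      have y2: "subst1 \<psi> x (Var ?y) \<in> FF" using FF_ex[of x \<psi>] Ex \<open>\<phi> \<in> FF\<close> by simp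
      have "?y \<notin> av (Ex x \<psi>)" by (rule wit_props(2))
      then have y1: "?y \<notin> av \<psi>" by simp
      obtain y where y: "y \<notin> av \<psi>" "subst1 \<psi> x (Var y) \<in> FF" using y1 y2 by blast
      then have "sat MM (rho0(x := cl (Var y))) \<psi>" using IH sat_ren by blast
      moreover have "cl (Var y) \<in> dom MM" unfolding dom_MM by auto
      ultimately show "sat MM rho0 \<phi>" using Ex by auto
    qed
  next
    case (BAll x s \<psi>)
    have w: "wff \<psi>" "wf_trm arF s" using less.prems BAll by auto
    have IH: "\<And>w. sat MM rho0 (subst1 \<psi> x (Var w)) \<longleftrightarrow> subst1 \<psi> x (Var w) \<in> FF"
      using less.hyps BAll w by (simp add: subst1_def wf_subst)
    show ?thesis
    proof
      assume sa: "sat MM rho0 \<phi>"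
      show "\<phi> \<in> FF"
      proof (rule ccontr)
        assume "\<phi> \<notin> FF"
        then obtain y where y: "y \<notin> av (BAll x s \<psi>)" "In (Var y) s \<in> FF" "subst1 \<psi> x (Var y) \<notin> FF"
          using FF_ball less.prems BAll by blast
        have "pint MM PIn [cl (Var y), eval MM rho0 s]" using in_sat w y by simp
        moreover have "cl (Var y) \<in> dom MM" unfolding dom_MM by auto
        ultimately have "sat MM (rho0(x := cl (Var y))) \<psi>" using sa BAll by simp
        then have "sat MM rho0 (subst1 \<psi> x (Var y))" using sat_ren y(1) by simp
        then show False using IH y by blast
      qed
    next
      assume fi: "\<phi> \<in> FF"
      show "sat MM rho0 \<phi>"
        unfolding BAll sat.simps
      proof (intro ballI impI)
        fix d assume d: "d \<in> dom MM" "pint MM PIn [d, eval MM rho0 s]"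
        then obtain z where z: "d = cl (Var z)" unfolding dom_MM by auto
        obtain v where v: "v \<notin> av \<psi>" "cl (Var v) = cl (Var z)" using pick[of "av \<psi>" z] by auto
        have "In (Var v) s \<in> FF" using in_sat[OF w(2), of v] d z v by simp
        moreover have "drv (Conj (In (Var v) s) (BAll x s \<psi>)) (subst1 \<psi> x (Var v))"
          using ren_fwd_ok[OF v(1)] w by (intro dL13) (auto simp: wff_subst1)
        ultimately have "subst1 \<psi> x (Var v) \<in> FF" using FF_mp2 fi BAll by blast
        then have "sat MM rho0 (subst1 \<psi> x (Var v))" using IH by blast
        then show "sat MM (rho0(x := d)) \<psi>" using sat_ren[OF v(1)] z v by simp
      qed
    qed
  qed
qed


lemma cl_dom: "wf_trm arF t \<Longrightarrow> cl t \<in> dom MM"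
  unfolding dom_MM by (subst cl_var) (auto intro: rangeI)

lemma pint_bin:
  assumes "parity arP P = 2"
  shows "pint MM P [cl (Var a), cl (Var b)] \<longleftrightarrow> Atom P [Var a, Var b] \<in> FF"
proof -
  have w: "wff (Atom P [Var a, Var b])" using assms by simp
  have "sat MM rho0 (Atom P [Var a, Var b]) = pint MM P [cl (Var a), cl (Var b)]"
    by (simp only: sat.simps eval.simps list.map rho0_def)
  then show ?thesis using sat_atom[OF w] by simp
qed

lemma compl:
  assumes "drv Top (Disj A B)" "drv (Conj A B) Bot" "wff A" "wff B"
  shows "B \<in> FF \<longleftrightarrow> A \<notin> FF"
proof -
  have "Disj A B \<in> FF" using FF_mp1[OF Top_FF assms(1)] .
  then have 1: "A \<in> FF \<or> B \<in> FF" using FF_disj assms(3,4) by simp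
  have 2: "\<not> (A \<in> FF \<and> B \<in> FF)"
  proof
    assume "A \<in> FF \<and> B \<in> FF"
    then have "Bot \<in> FF" using FF_mp2[OF _ _ assms(2)] by simp
    then show False using Bot_FF by simp
  qed
  from 1 2 show ?thesis by blast
qed

lemma admissible_MM: "admissible arF MM"
  unfolding admissible_def is_struc_def
proof (intro conjI allI impI ballI)
  show "dom MM \<noteq> {}" unfolding dom_MM by simp
next
  fix f us assume "length us = arF f \<and> set us \<subseteq> dom MM"
  then show "fint MM f us \<in> dom MM" unfolding fint_MM by (intro cl_dom) auto
next
  fix a b assume "a \<in> dom MM" "b \<in> dom MM"
  then obtain x y where xy: "a = cl (Var x)" "b = cl (Var y)" unfolding dom_MM by auto
  show "pint MM PEq [a, b] \<longleftrightarrow> a = b"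
    using pint_bin[of PEq x y] cl_eq[of "Var x" "Var y"] xy by simp
  show "pint MM PNeq [a, b] \<longleftrightarrow> \<not> pint MM PEq [a, b]"
    using pint_bin[of PEq x y] pint_bin[of PNeq x y] xy
      compl[OF dL18[of "Var x" "Var y"] dL19[of "Var x" "Var y"]] by simp
  show "pint MM PNin [a, b] \<longleftrightarrow> \<not> pint MM PIn [a, b]"
    using pint_bin[of PIn x y] pint_bin[of PNin x y] xy
      compl[OF dL16[of "Var x" "Var y"] dL17[of "Var x" "Var y"]] by simp
qed

lemma models_Ax:
  assumes c: "c \<in> Ax" "wff (fst c)" "wff (snd c)"
  shows "models_cond MM c"
  unfolding models_cond_def
proof (intro allI impI)
  fix \<rho> assume as: "assignment MM \<rho>" and s1: "sat MM \<rho> (fst c)"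
  let ?S = "bv (fst c) \<union> bv (snd c)"
  have fb: "finite (bv \<phi>)" for \<phi> :: "('f,'p) fm" by (rule finite_subset[OF bv_av finite_av])
  have fS: "finite ?S" using fb by simp
  have ex: "\<forall>v. \<exists>w. w \<notin> ?S \<and> cl (Var w) = \<rho> v"
  proof
    fix v
    obtain z where "\<rho> v = cl (Var z)" using as unfolding assignment_def dom_MM by blast
    then show "\<exists>w. w \<notin> ?S \<and> cl (Var w) = \<rho> v" using pick[OF fS, of z] by auto
  qed
  obtain g where "\<forall>v. g v \<notin> ?S \<and> cl (Var (g v)) = \<rho> v"
    using choice[OF ex] by blast
  then have g: "\<And>v. g v \<notin> ?S" "\<And>v. cl (Var (g v)) = \<rho> v" by auto
  let ?\<sigma> = "\<lambda>v. Var (g v) :: 'f trm"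
  have ok1: "substok ?\<sigma> (fst c)" using g(1) by (intro substok_gen) auto
  have ok2: "substok ?\<sigma> (snd c)" using g(1) by (intro substok_gen) auto
  have r: "(\<lambda>v. eval MM rho0 (?\<sigma> v)) = \<rho>" using g(2) by (auto simp: rho0_def)
  have w1: "wff (subst ?\<sigma> (fst c))" and w2: "wff (subst ?\<sigma> (snd c))"
    using c by (auto intro: wf_subst)
  have e1: "sat MM rho0 (subst ?\<sigma> (fst c)) = sat MM \<rho> (fst c)"
    using sat_subst[OF ok1, of MM rho0] unfolding r .
  have e2: "sat MM rho0 (subst ?\<sigma> (snd c)) = sat MM \<rho> (snd c)"
    using sat_subst[OF ok2, of MM rho0] unfolding r .
  have "sat MM rho0 (subst ?\<sigma> (fst c))" using e1 s1 by simp
  then have "subst ?\<sigma> (fst c) \<in> FF" using truth w1 by blast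
  then have "subst ?\<sigma> (snd c) \<in> FF" using FF_mp1 drv_ax[OF c(1) ok1 ok2 w1 w2] by blast
  then have "sat MM rho0 (subst ?\<sigma> (snd c))" using truth w2 by blast
  then show "sat MM \<rho> (snd c)" using e2 by simp
qed

lemma counter: "assignment MM rho0 \<and> sat MM rho0 \<chi> \<and> \<not> sat MM rho0 \<chi>'"
proof -
  have "assignment MM rho0" unfolding assignment_def rho0_def dom_MM by auto
  moreover have "sat MM rho0 \<chi>" using truth wchi chi_FF by blast
  moreover have "\<not> sat MM rho0 \<chi>'" using truth wchi chi'_DD FF_DD_disj by blast
  ultimately show ?thesis by blast
qed

end

theorem mainTheorem1:
  fixes arF :: "'f::countable \<Rightarrow> nat"
    and arP :: "'p::countable \<Rightarrow> nat"
    and T :: "('f, 'p) cond set"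
    and \<chi> \<chi>' :: "('f, 'p) fm"
  assumes "infinite (UNIV :: 'u set)"
    and "\<forall>c\<in>T. wf_fm arF arP (fst c) \<and> wf_fm arF arP (snd c)"
    and "wf_fm arF arP \<chi>" and "wf_fm arF arP \<chi>'"
  shows "provable arF arP (T \<union> logical_axioms) (\<chi>, \<chi>') \<or>
         (\<exists>M :: ('u, 'f, 'p) struc. admissible arF M \<and> (\<forall>c\<in>T. models_cond M c) \<and>
            (\<exists>\<rho>. assignment M \<rho> \<and> sat M \<rho> \<chi> \<and> \<not> sat M \<rho> \<chi>'))"
proof (cases "provable arF arP (T \<union> logical_axioms) (\<chi>, \<chi>')")
  case True then show ?thesis by simp
next
  case False
  interpret P: posl arF arP "T \<union> logical_axioms" by unfold_locales auto
  have nd: "\<not> P.drv \<chi> \<chi>'" using False P.drv_provable by blast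
  obtain enc :: "nat \<Rightarrow> 'u" where enc: "inj enc"
    using assms(1) infinite_countable_subset[of "UNIV :: 'u set"] by auto
  interpret M: model arF arP "T \<union> logical_axioms" \<chi> \<chi>' enc
    by unfold_locales (use assms nd enc in auto)
  have "admissible arF M.MM" by (rule M.admissible_MM)
  moreover have "\<forall>c\<in>T. models_cond M.MM c" using assms(2) M.models_Ax by blast
  moreover have "\<exists>\<rho>. assignment M.MM \<rho> \<and> sat M.MM \<rho> \<chi> \<and> \<not> sat M.MM \<rho> \<chi>'" using M.counter by blast
  ultimately show ?thesis by blast
qed

end
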